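(* Let $\rho,\sigma$ be density operators on a finite-dimensional Hilbert space and $\epsilon_\rho,\epsilon_\sigma\ge0$. Then $\beta_{\epsilon_\rho}(\rho\|\sigma)\le\epsilon_\sigma$ if and only if $(\rho,\sigma)\succeq_{(\epsilon_\rho,\epsilon_\sigma)}(\rho',\sigma')$ for all density operators $\rho',\sigma'$ (on any finite-dimensional Hilbert space).
   Context: $T(\rho,\sigma)=\frac12\|\rho-\sigma\|_1$; $(\rho,\sigma)\succeq_{(\epsilon_\rho,\epsilon_\sigma)}(\rho',\sigma')$ means some quantum channel $\mathcal E$ satisfies $T(\mathcal E(\rho),\rho')\le\epsilon_\rho$ and $T(\mathcal E(\sigma),\sigma')\le\epsilon_\sigma$. $\beta_x(\rho\|\sigma)=\min\{\mathrm{Tr}(\sigma Q):0\le Q\le\mathbb1,\ \mathrm{Tr}(\rho Q)\ge1-x\}$. *)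

theory Defs
  imports "Jordan_Normal_Form.Matrix" "Jordan_Normal_Form.Char_Poly"
begin

text \<open>Operators on the Hilbert space C^n are n x n complex matrices.\<close>

definition adj :: "complex mat \<Rightarrow> complex mat" where
  "adj A = mat (dim_col A) (dim_row A) (\<lambda>(i,j). cnj (A $$ (j,i)))"

definition mtrace :: "complex mat \<Rightarrow> complex" where
  "mtrace A = (\<Sum>i<dim_row A. A $$ (i,i))"

definition psd :: "nat \<Rightarrow> complex mat \<Rightarrow> bool" where
  "psd n A \<longleftrightarrow> A \<in> carrier_mat n n \<and> adj A = A \<and>
     (\<forall>v \<in> carrier_vec n. 0 \<le> Re (map_vec cnj v \<bullet> (A *\<^sub>v v)))"

definition density :: "nat \<Rightarrow> complex mat \<Rightarrow> bool" where
  "density n A \<longleftrightarrow> psd n A \<and> mtrace A = 1"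

text \<open>Trace norm ||A||_1 = sum of the singular values of A, i.e. sum of the
  square roots of the eigenvalues of A^* A (counted with algebraic multiplicity).\<close>
definition trace_norm :: "complex mat \<Rightarrow> real" where
  "trace_norm A = (let p = char_poly (adj A * A) in
     \<Sum>z\<in>{z. poly p z = 0}. real (order z p) * sqrt (Re z))"

definition trace_dist :: "complex mat \<Rightarrow> complex mat \<Rightarrow> real" where
  "trace_dist \<rho> \<sigma> = trace_norm (\<rho> - \<sigma>) / 2"

text \<open>Quantum channel from operators on C^n to operators on C^m, given in
  Kraus form: E(A) = sum_k K_k A K_k^*, with sum_k K_k^* K_k = 1.\<close>
definition kraus_apply :: "nat \<Rightarrow> complex mat list \<Rightarrow> complex mat \<Rightarrow> complex mat" where
  "kraus_apply m Ks A = foldr (\<lambda>K acc. K * A * adj K + acc) Ks (0\<^sub>m m m)"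

definition quantum_channel :: "nat \<Rightarrow> nat \<Rightarrow> (complex mat \<Rightarrow> complex mat) \<Rightarrow> bool" where
  "quantum_channel n m E \<longleftrightarrow> (\<exists>Ks. (\<forall>K \<in> set Ks. K \<in> carrier_mat m n) \<and>
      foldr (\<lambda>K acc. adj K * K + acc) Ks (0\<^sub>m n n) = 1\<^sub>m n \<and>
      (\<forall>A \<in> carrier_mat n n. E A = kraus_apply m Ks A))"

definition rel_maj :: "nat \<Rightarrow> nat \<Rightarrow> real \<Rightarrow> real \<Rightarrow> complex mat \<Rightarrow> complex mat
    \<Rightarrow> complex mat \<Rightarrow> complex mat \<Rightarrow> bool" where
  "rel_maj n m er es \<rho> \<sigma> \<rho>' \<sigma>' \<longleftrightarrow> (\<exists>E. quantum_channel n m E \<and>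
      trace_dist (E \<rho>) \<rho>' \<le> er \<and> trace_dist (E \<sigma>) \<sigma>' \<le> es)"

text \<open>Hypothesis testing quantity beta_x(rho||sigma) on C^n (the minimum is attained,
  so it equals the infimum).\<close>
definition beta :: "nat \<Rightarrow> real \<Rightarrow> complex mat \<Rightarrow> complex mat \<Rightarrow> real" where
  "beta n x \<rho> \<sigma> = Inf {Re (mtrace (\<sigma> * Q)) | Q. psd n Q \<and> psd n (1\<^sub>m n - Q) \<and>
      Re (mtrace (\<rho> * Q)) \<ge> 1 - x}"

end

theory Submission
  imports Defs "HOL-Computational_Algebra.Fundamental_Theorem_Algebra"
begin

lemma mult_entry:
  assumes "A \<in> carrier_mat nr n" "B \<in> carrier_mat n nc" "i < nr" "j < nc"
  shows "(A * B) $$ (i,j) = (\<Sum>k<n. A $$ (i,k) * B $$ (k,j))"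
  using assms by (auto simp: scalar_prod_def atLeast0LessThan)

lemma mult_vec_entry:
  assumes "A \<in> carrier_mat nr n" "v \<in> carrier_vec n" "i < nr"
  shows "(A *\<^sub>v v) $ i = (\<Sum>k<n. A $$ (i,k) * v $ k)"
  using assms by (auto simp: scalar_prod_def atLeast0LessThan)

lemma adj_dims[simp]: "dim_row (adj A) = dim_col A" "dim_col (adj A) = dim_row A"
  by (auto simp: adj_def)

lemma adj_carrier[simp]: "A \<in> carrier_mat nr nc \<Longrightarrow> adj A \<in> carrier_mat nc nr"
  by (auto simp: adj_def)

lemma adj_index[simp]: "i < dim_col A \<Longrightarrow> j < dim_row A \<Longrightarrow> adj A $$ (i,j) = cnj (A $$ (j,i))"
  by (auto simp: adj_def)

lemma adj_adj[simp]: "adj (adj A) = A"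
  by (rule eq_matI, auto)

lemma adj_mult:
  assumes "A \<in> carrier_mat nr n" "B \<in> carrier_mat n nc"
  shows "adj (A * B) = adj B * adj A"
proof (rule eq_matI)
  fix i j assume ij: "i < dim_row (adj B * adj A)" "j < dim_col (adj B * adj A)"
  hence i: "i < nc" and j: "j < nr" using assms by auto
  have "adj (A * B) $$ (i,j) = cnj ((A*B) $$ (j,i))" using assms i j by auto
  also have "\<dots> = (\<Sum>k<n. cnj (A $$ (j,k)) * cnj (B $$ (k,i)))"
    using mult_entry[OF assms j i] by simp
  also have "\<dots> = (adj B * adj A) $$ (i,j)"
    by (subst mult_entry[of _ nc n _ nr], insert assms i j, auto simp: mult.commute intro!: sum.cong)
  finally show "adj (A * B) $$ (i,j) = (adj B * adj A) $$ (i,j)" .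
qed (insert assms, auto)

lemma adj_one[simp]: "adj (1\<^sub>m n) = 1\<^sub>m n"
  by (rule eq_matI, auto)

lemma unitary_right:
  assumes "U \<in> carrier_mat n n" "adj U * U = 1\<^sub>m n"
  shows "U * adj U = 1\<^sub>m n"
  using mat_mult_left_right_inverse[of "adj U" n U] assms by auto

definition diagm :: "nat \<Rightarrow> (nat \<Rightarrow> real) \<Rightarrow> complex mat" where
  "diagm n d = mat n n (\<lambda>(i,j). if i = j then complex_of_real (d i) else 0)"

lemma diagm_carrier[simp]: "diagm n d \<in> carrier_mat n n" by (simp add: diagm_def)
lemma diagm_index[simp]: "i < n \<Longrightarrow> j < n \<Longrightarrow> diagm n d $$ (i,j) = (if i = j then complex_of_real (d i) else 0)"
  by (simp add: diagm_def)
lemma diagm_dims[simp]: "dim_row (diagm n d) = n" "dim_col (diagm n d) = n"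
  by (simp_all add: diagm_def)

definition bd :: "complex \<Rightarrow> complex mat \<Rightarrow> complex mat" where
  "bd x B = mat (Suc (dim_row B)) (Suc (dim_col B))
     (\<lambda>(i,j). if i = 0 then (if j = 0 then x else 0) else if j = 0 then 0 else B $$ (i - 1, j - 1))"

lemma bd_dims[simp]: "dim_row (bd x B) = Suc (dim_row B)" "dim_col (bd x B) = Suc (dim_col B)"
  by (simp_all add: bd_def)

lemma bd_carrier[simp]: "B \<in> carrier_mat n m \<Longrightarrow> bd x B \<in> carrier_mat (Suc n) (Suc m)"
  by (simp add: bd_def)

lemma bd_index:
  "i < Suc (dim_row B) \<Longrightarrow> j < Suc (dim_col B) \<Longrightarrow>
   bd x B $$ (i,j) = (if i = 0 then (if j = 0 then x else 0) else if j = 0 then 0 else B $$ (i - 1, j - 1))"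
  by (simp add: bd_def)

lemma bd_index_simps[simp]:
  "bd x B $$ (0,0) = x"
  "j < dim_col B \<Longrightarrow> bd x B $$ (0, Suc j) = 0"
  "i < dim_row B \<Longrightarrow> bd x B $$ (Suc i, 0) = 0"
  "i < dim_row B \<Longrightarrow> j < dim_col B \<Longrightarrow> bd x B $$ (Suc i, Suc j) = B $$ (i,j)"
  by (simp_all add: bd_def)

lemma bd_mult:
  assumes B: "B \<in> carrier_mat n n" and C: "C \<in> carrier_mat n n"
  shows "bd x B * bd y C = bd (x * y) (B * C)"
proof (rule eq_matI)
  fix i j assume "i < dim_row (bd (x * y) (B * C))" "j < dim_col (bd (x * y) (B * C))"
  hence i: "i < Suc n" and j: "j < Suc n" using B C by auto
  have "(bd x B * bd y C) $$ (i,j) = (\<Sum>k<Suc n. bd x B $$ (i,k) * bd y C $$ (k,j))"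
    by (rule mult_entry[of _ "Suc n" "Suc n" _ "Suc n"], insert B C i j, auto)
  also have "\<dots> = bd x B $$ (i,0) * bd y C $$ (0,j) + (\<Sum>k<n. bd x B $$ (i,Suc k) * bd y C $$ (Suc k,j))"
    by (subst sum.lessThan_Suc_shift, simp)
  also have "\<dots> = bd (x * y) (B * C) $$ (i,j)"
  proof (cases i)
    case 0 thus ?thesis using B C j by (cases j, auto)
  next
    case (Suc i')
    hence i': "i' < n" using i by auto
    show ?thesis
    proof (cases j)
      case 0 thus ?thesis using B C i' Suc by auto
    next
      case (Suc j')
      hence j': "j' < n" using j by auto
      show ?thesis using B C i' j' \<open>i = Suc i'\<close> Suc
        by (auto simp: mult_entry[OF B C i' j'])
    qed
  qed
  finally show "(bd x B * bd y C) $$ (i,j) = bd (x * y) (B * C) $$ (i,j)" .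
qed (insert B C, auto)

lemma adj_bd: "adj (bd x B) = bd (cnj x) (adj B)"
  by (rule eq_matI, auto simp: bd_index)

lemma bd_one: "bd 1 (1\<^sub>m n) = 1\<^sub>m (Suc n)"
  by (rule eq_matI, auto simp: bd_index)

lemma diagm_Suc: "diagm (Suc n) d = bd (complex_of_real (d 0)) (diagm n (\<lambda>i. d (Suc i)))"
  by (rule eq_matI, auto simp: bd_index)

lemma eigen_exists:
  assumes A: "(A :: complex mat) \<in> carrier_mat n n" and n: "0 < n"
  shows "\<exists>e v. v \<in> carrier_vec n \<and> v \<noteq> 0\<^sub>v n \<and> A *\<^sub>v v = e \<cdot>\<^sub>v v"
proof -
  have "degree (char_poly A) = n" using degree_monic_char_poly[OF A] by auto
  hence "\<not> constant (poly (char_poly A))" using n by (simp add: constant_degree)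
  then obtain e where "poly (char_poly A) e = 0" using fundamental_theorem_of_algebra by blast
  hence "eigenvalue A e" using eigenvalue_root_char_poly[OF A] by simp
  then obtain v where "eigenvector A v e" unfolding eigenvalue_def by blast
  thus ?thesis unfolding eigenvector_def using A by auto
qed

lemma cnj_mult_self: "cnj z * z = complex_of_real ((cmod z)\<^sup>2)"
  by (metis complex_norm_square mult.commute)

lemma householder:
  assumes u: "u \<in> carrier_vec n" and n: "0 < n"
    and nu: "(\<Sum>i<n. (cmod (u $ i))\<^sup>2) = 1"
  shows "\<exists>H t. H \<in> carrier_mat n n \<and> adj H * H = 1\<^sub>m n \<and> (\<forall>i<n. H $$ (i,0) = t * u $ i)"
proof -
  define a where "a = u $ 0"
  define th where "th = (if a = 0 then 1 else a / complex_of_real (cmod a))"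
  have th1: "cmod th = 1" by (auto simp: th_def norm_divide)
  have tha: "a = th * complex_of_real (cmod a)" by (auto simp: th_def)
  have cth: "cnj th * th = 1" using th1 by (simp add: cnj_mult_self)
  define w where "w = (\<lambda>i. u $ i - (if i = 0 then th else 0))"
  define N where "N = (\<Sum>i<n. (cmod (w i))\<^sup>2)"
  have sum0: "(\<Sum>i<n. f i) = f 0 + (\<Sum>i<n - 1. f (Suc i))" for f :: "nat \<Rightarrow> real"
  proof -
    obtain m where "n = Suc m" using n by (cases n) auto
    thus ?thesis by (simp del: sum.lessThan_Suc add: sum.lessThan_Suc_shift)
  qed
  have "N = (cmod (a - th))\<^sup>2 + (\<Sum>i<n - 1. (cmod (u $ Suc i))\<^sup>2)"
    unfolding N_def by (subst sum0, simp add: w_def a_def)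
  also have "(\<Sum>i<n - 1. (cmod (u $ Suc i))\<^sup>2) = 1 - (cmod a)\<^sup>2"
    using nu sum0[of "\<lambda>i. (cmod (u $ i))\<^sup>2"] by (simp add: a_def)
  also have "a - th = th * complex_of_real (cmod a - 1)" using tha by (simp add: algebra_simps)
  also have "(cmod (th * complex_of_real (cmod a - 1)))\<^sup>2 = (cmod a - 1)\<^sup>2"
  proof -
    have "cmod (th * complex_of_real (cmod a - 1)) = \<bar>cmod a - 1\<bar>"
      by (simp only: norm_mult th1 norm_of_real) simp
    thus ?thesis by simp
  qed
  finally have N: "N = 2 - 2 * cmod a" by (simp add: power2_eq_square algebra_simps)
  show ?thesis
  proof (cases "N = 0")
    case True
    hence w0: "\<And>i. i < n \<Longrightarrow> w i = 0" unfolding N_def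
      by (subst (asm) sum_nonneg_eq_0_iff, auto)
    show ?thesis
    proof (intro exI conjI allI impI)
      show "1\<^sub>m n \<in> carrier_mat n n" "adj (1\<^sub>m n) * 1\<^sub>m n = 1\<^sub>m n" by auto
      fix i assume i: "i < n"
      have "u $ i = (if i = 0 then th else 0)" using w0[OF i] by (simp add: w_def)
      thus "1\<^sub>m n $$ (i, 0) = cnj th * u $ i" using i n cth by auto
    qed
  next
    case False
    define c where "c = complex_of_real (2 / N)"
    define H where "H = mat n n (\<lambda>(i,j). (if i = j then 1 else 0) - c * w i * cnj (w j))"
    have H: "H \<in> carrier_mat n n" by (simp add: H_def)
    have cc: "cnj c = c" by (simp add: c_def)
    have Nc: "(\<Sum>k<n. cnj (w k) * w k) = complex_of_real N"
      unfolding N_def by (simp add: cnj_mult_self)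
    have cN: "c * c * complex_of_real N = 2 * c" using False
      by (simp add: c_def power2_eq_square field_simps flip: of_real_mult)
    have "adj H * H = 1\<^sub>m n"
    proof (rule eq_matI)
      fix i j assume "i < dim_row (1\<^sub>m n)" "j < dim_col (1\<^sub>m n)"
      hence i: "i < n" and j: "j < n" by auto
      have "(adj H * H) $$ (i,j) = (\<Sum>k<n. cnj (H $$ (k,i)) * H $$ (k,j))"
        by (subst mult_entry[of _ n n _ n], insert H i j, auto)
      also have "\<dots> = (\<Sum>k<n. ((if k = i then 1 else 0) - c * cnj (w k) * w i) *
                              ((if k = j then 1 else 0) - c * w k * cnj (w j)))"
        by (rule sum.cong, insert i j, auto simp: H_def cc)
      also have "\<dots> = (\<Sum>k<n. (if k = i then 1 else 0) * (if k = j then 1 else 0))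
          - (\<Sum>k<n. (if k = i then 1 else 0) * (c * w k * cnj (w j)))
          - (\<Sum>k<n. (if k = j then 1 else 0) * (c * cnj (w k) * w i))
          + c * c * w i * cnj (w j) * (\<Sum>k<n. cnj (w k) * w k)"
        by (simp add: algebra_simps sum.distrib sum_subtractf sum_distrib_left)
      also have "\<dots> = (if i = j then 1 else 0) - c * w i * cnj (w j) - c * w i * cnj (w j)
                 + c * c * complex_of_real N * w i * cnj (w j)"
        using i j by (simp add: Nc if_distrib[of "\<lambda>x. x * _"] cong: if_cong)
      also have "\<dots> = 1\<^sub>m n $$ (i,j)" using i j cN by (simp, blast)
      finally show "(adj H * H) $$ (i,j) = 1\<^sub>m n $$ (i,j)" .
    qed (insert H, auto)
    moreover have "H $$ (i,0) = cnj th * u $ i" if i: "i < n" for i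
    proof -
      have "cnj (w 0) = - cnj th * complex_of_real (1 - cmod a)"
        using arg_cong[OF tha, of cnj] by (simp add: w_def a_def[symmetric] algebra_simps)
      hence "c * cnj (w 0) = - cnj th * (c * complex_of_real (1 - cmod a))"
        by (simp only: mult.left_commute mult_minus_right mult_minus_left)
      also have "c * complex_of_real (1 - cmod a) = complex_of_real (2 / N * (1 - cmod a))"
        by (simp add: c_def)
      finally have "c * cnj (w 0) = - cnj th * complex_of_real (2 / N * (1 - cmod a))" .
      moreover have "2 / N * (1 - cmod a) = 1" using False by (simp add: N field_simps)
      ultimately have cw: "c * cnj (w 0) = - cnj th" by simp
      have "H $$ (i,0) = (if i = 0 then 1 else 0) - w i * (c * cnj (w 0))"
        using i n by (simp add: H_def algebra_simps)
      also have "\<dots> = cnj th * u $ i" unfolding cw using cth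
        by (simp add: w_def algebra_simps)
      finally show ?thesis .
    qed
    ultimately show ?thesis using H by blast
  qed
qed

lemma spectral:
  assumes "A \<in> carrier_mat n n" "adj A = A"
  shows "\<exists>U d. U \<in> carrier_mat n n \<and> adj U * U = 1\<^sub>m n \<and> A = U * diagm n d * adj U"
  using assms
proof (induction n arbitrary: A)
  case 0
  show ?case
    by (rule exI[of _ "1\<^sub>m 0"], rule exI[of _ "\<lambda>_. 0"], insert 0, auto)
next
  case (Suc n A)
  note A = Suc.prems(1) and hA = Suc.prems(2)
  obtain e v where v: "v \<in> carrier_vec (Suc n)" and v0: "v \<noteq> 0\<^sub>v (Suc n)" and ev: "A *\<^sub>v v = e \<cdot>\<^sub>v v"
    using eigen_exists[OF A] by auto
  define s where "s = (\<Sum>i<Suc n. (cmod (v $ i))\<^sup>2)"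
  have "s \<noteq> 0"
  proof
    assume "s = 0"
    hence "\<forall>i<Suc n. v $ i = 0" unfolding s_def by (subst (asm) sum_nonneg_eq_0_iff, auto)
    hence "v = 0\<^sub>v (Suc n)" using v by (intro eq_vecI, auto)
    thus False using v0 by simp
  qed
  moreover have "s \<ge> 0" unfolding s_def by (rule sum_nonneg) simp
  ultimately have s: "s > 0" by simp
  define u where "u = complex_of_real (1 / sqrt s) \<cdot>\<^sub>v v"
  have u: "u \<in> carrier_vec (Suc n)" using v by (simp add: u_def)
  have nu: "(\<Sum>i<Suc n. (cmod (u $ i))\<^sup>2) = 1"
  proof -
    have "(\<Sum>i<Suc n. (cmod (u $ i))\<^sup>2) = (\<Sum>i<Suc n. (cmod (v $ i))\<^sup>2 / s)"
      by (rule sum.cong, insert v s, auto simp: u_def norm_divide power_divide)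
    also have "\<dots> = 1" using s by (simp only: sum_divide_distrib[symmetric] s_def[symmetric]) simp
    finally show ?thesis .
  qed
  have eu: "A *\<^sub>v u = e \<cdot>\<^sub>v u" unfolding u_def using A v ev
    by (simp add: mult_mat_vec smult_smult_assoc mult.commute)
  obtain H t where H: "H \<in> carrier_mat (Suc n) (Suc n)" and HH: "adj H * H = 1\<^sub>m (Suc n)"
    and H0: "\<forall>i<Suc n. H $$ (i,0) = t * u $ i"
    using householder[OF u _ nu] by auto
  have HH': "H * adj H = 1\<^sub>m (Suc n)" using unitary_right[OF H HH] .
  define M where "M = adj H * (A * H)"
  have AHc: "A * H \<in> carrier_mat (Suc n) (Suc n)" using A H by simp
  have M: "M \<in> carrier_mat (Suc n) (Suc n)" unfolding M_def by (rule mult_carrier_mat[OF adj_carrier[OF H] AHc])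
  have hM: "adj M = M"
  proof -
    have "adj M = adj (A * H) * adj (adj H)" unfolding M_def
      by (rule adj_mult[OF adj_carrier[OF H] AHc])
    also have "\<dots> = adj H * adj A * H" using adj_mult[OF A H] by simp
    also have "\<dots> = M" unfolding M_def hA using A H by (rule assoc_mult_mat[OF adj_carrier[OF H]])
    finally show ?thesis .
  qed
  have AH0: "(A * H) $$ (k,0) = e * H $$ (k,0)" if k: "k < Suc n" for k
  proof -
    have "(A * H) $$ (k,0) = (\<Sum>l<Suc n. A $$ (k,l) * (t * u $ l))"
      by (subst mult_entry[OF A H k], simp, rule sum.cong, insert H0, auto)
    also have "\<dots> = t * (A *\<^sub>v u) $ k"
      by (subst mult_vec_entry[OF A u k], simp add: sum_distrib_left algebra_simps)
    also have "\<dots> = e * H $$ (k,0)" using eu k u H0 by simp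
    finally show ?thesis .
  qed
  have M0: "M $$ (i,0) = (if i = 0 then e else 0)" if i: "i < Suc n" for i
  proof -
    have "M $$ (i,0) = (\<Sum>k<Suc n. adj H $$ (i,k) * (A * H) $$ (k,0))"
      unfolding M_def by (rule mult_entry[OF adj_carrier[OF H] AHc i], simp)
    also have "\<dots> = (\<Sum>k<Suc n. adj H $$ (i,k) * (e * H $$ (k,0)))"
      by (rule sum.cong, simp_all add: AH0)
    also have "\<dots> = e * (adj H * H) $$ (i,0)"
      by (subst mult_entry[of _ "Suc n" "Suc n" _ "Suc n"], insert H i, auto simp: sum_distrib_left algebra_simps)
    finally show ?thesis using HH i by simp
  qed
  have M00: "M $$ (0,0) = complex_of_real (Re e)"
  proof -
    have "cnj (M $$ (0,0)) = M $$ (0,0)" using arg_cong[OF hM, of "\<lambda>X. X $$ (0,0)"] M by simp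
    hence "Im (M $$ (0,0)) = 0" by (metis Reals_cnj_iff complex_is_Real_iff)
    thus ?thesis using M0[of 0] by (simp add: complex_eq_iff)
  qed
  define M' where "M' = mat n n (\<lambda>(i,j). M $$ (Suc i, Suc j))"
  have M': "M' \<in> carrier_mat n n" by (simp add: M'_def)
  have hM': "adj M' = M'"
  proof (rule eq_matI)
    fix i j assume "i < dim_row M'" "j < dim_col M'"
    hence i: "i < n" and j: "j < n" by (auto simp: M'_def)
    show "adj M' $$ (i,j) = M' $$ (i,j)"
      using arg_cong[OF hM, of "\<lambda>X. X $$ (Suc i, Suc j)"] M i j by (simp add: M'_def)
  qed (auto simp: M'_def)
  obtain U' d' where U': "U' \<in> carrier_mat n n" and UU': "adj U' * U' = 1\<^sub>m n"
    and M'eq: "M' = U' * diagm n d' * adj U'"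
    using Suc.IH[OF M' hM'] by auto
  have Mbd: "M = bd (complex_of_real (Re e)) M'"
  proof (rule eq_matI)
    fix i j assume "i < dim_row (bd (complex_of_real (Re e)) M')" "j < dim_col (bd (complex_of_real (Re e)) M')"
    hence i: "i < Suc n" and j: "j < Suc n" using M' by auto
    show "M $$ (i,j) = bd (complex_of_real (Re e)) M' $$ (i,j)"
    proof (cases i)
      case 0
      show ?thesis
      proof (cases j)
        case 0 thus ?thesis using \<open>i = 0\<close> M00 by simp
      next
        case (Suc j')
        have "M $$ (0, j) = cnj (M $$ (j, 0))" using arg_cong[OF hM, of "\<lambda>X. X $$ (0, j)"] M j by simp
        thus ?thesis using M0[OF j] Suc \<open>i = 0\<close> j M' by simp
      qed
    next
      case (Suc i')
      show ?thesis
      proof (cases j)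
        case 0 thus ?thesis using M0[OF i] Suc i M' by simp
      next
        case (Suc j') thus ?thesis using \<open>i = Suc i'\<close> i j M' by (simp add: M'_def)
      qed
    qed
  qed (insert M M', auto)
  define d where "d = (\<lambda>i. if i = 0 then Re e else d' (i - 1))"
  define B where "B = bd 1 U'"
  have B: "B \<in> carrier_mat (Suc n) (Suc n)" using U' by (simp add: B_def)
  have D: "diagm (Suc n) d = bd (complex_of_real (Re e)) (diagm n d')"
    by (simp add: diagm_Suc d_def)
  have D': "diagm n d' \<in> carrier_mat n n" by simp
  have MB: "M = B * diagm (Suc n) d * adj B"
  proof -
    have "B * diagm (Suc n) d = bd (complex_of_real (Re e)) (U' * diagm n d')"
      unfolding B_def D using bd_mult[OF U' D', of 1] by simp
    moreover have "\<dots> * adj B = bd (complex_of_real (Re e)) (U' * diagm n d' * adj U')"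
      unfolding B_def adj_bd using bd_mult[OF mult_carrier_mat[OF U' D'] adj_carrier[OF U'], of _ "cnj 1"]
      by simp
    ultimately show ?thesis unfolding Mbd M'eq by simp
  qed
  define U where "U = H * B"
  have U: "U \<in> carrier_mat (Suc n) (Suc n)" using H B by (simp add: U_def)
  have aB: "adj B \<in> carrier_mat (Suc n) (Suc n)" using B by simp
  have aH: "adj H \<in> carrier_mat (Suc n) (Suc n)" using H by simp
  have "adj U * U = adj B * adj H * (H * B)" unfolding U_def adj_mult[OF H B] ..
  also have "\<dots> = adj B * (adj H * (H * B))" by (rule assoc_mult_mat[OF aB aH mult_carrier_mat[OF H B]])
  also have "adj H * (H * B) = (adj H * H) * B" by (rule assoc_mult_mat[OF aH H B, symmetric])
  also have "\<dots> = B" using HH B by simp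
  also have "adj B * B = 1\<^sub>m (Suc n)" unfolding B_def adj_bd
    using bd_mult[OF adj_carrier[OF U'] U', of "cnj 1" 1] UU' by (simp add: bd_one)
  finally have UU: "adj U * U = 1\<^sub>m (Suc n)" .
  have "A = (H * adj H) * A * (H * adj H)" using HH' A by simp
  also have "\<dots> = H * (adj H * A) * (H * adj H)"
    using assoc_mult_mat[OF H aH A] by simp
  also have "\<dots> = H * (adj H * A) * H * adj H"
    using assoc_mult_mat[OF mult_carrier_mat[OF H mult_carrier_mat[OF aH A]] H aH] by simp
  also have "H * (adj H * A) * H = H * M"
    unfolding M_def using assoc_mult_mat[OF H mult_carrier_mat[OF aH A] H] assoc_mult_mat[OF aH A H] by simp
  also have "M = B * (diagm (Suc n) d * adj B)" unfolding MB
    by (rule assoc_mult_mat[OF B diagm_carrier aB])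
  also have "H * (B * (diagm (Suc n) d * adj B)) = U * (diagm (Suc n) d * adj B)"
    unfolding U_def by (rule assoc_mult_mat[OF H B mult_carrier_mat[OF diagm_carrier aB], symmetric])
  also have "U * (diagm (Suc n) d * adj B) * adj H = U * diagm (Suc n) d * (adj B * adj H)"
    using assoc_mult_mat[OF U diagm_carrier aB] assoc_mult_mat[OF mult_carrier_mat[OF U diagm_carrier] aB aH] by simp
  also have "adj B * adj H = adj U" unfolding U_def adj_mult[OF H B] ..
  finally show ?case using U UU by blast
qed

definition qf :: "nat \<Rightarrow> complex mat \<Rightarrow> (nat \<Rightarrow> complex) \<Rightarrow> complex" where
  "qf n A x = (\<Sum>j<n. \<Sum>k<n. cnj (x j) * A $$ (j,k) * x k)"

lemma psd_qf_vec:
  assumes "A \<in> carrier_mat n n" "v \<in> carrier_vec n"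
  shows "map_vec cnj v \<bullet> (A *\<^sub>v v) = qf n A (\<lambda>j. v $ j)"
  using assms by (auto simp: qf_def scalar_prod_def atLeast0LessThan sum_distrib_left mult.assoc)

lemma psd_qf: "psd n A \<Longrightarrow> 0 \<le> Re (qf n A x)"
proof -
  assume p: "psd n A"
  hence A: "A \<in> carrier_mat n n" by (simp add: psd_def)
  have v: "vec n x \<in> carrier_vec n" by simp
  have "0 \<le> Re (map_vec cnj (vec n x) \<bullet> (A *\<^sub>v vec n x))" using p v by (simp add: psd_def)
  also have "map_vec cnj (vec n x) \<bullet> (A *\<^sub>v vec n x) = qf n A x"
    unfolding psd_qf_vec[OF A v] qf_def by (intro sum.cong refl, auto)
  finally show ?thesis .
qed

lemma qf_psd:
  assumes "A \<in> carrier_mat n n" "adj A = A" "\<And>x. 0 \<le> Re (qf n A x)"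
  shows "psd n A"
  using assms psd_qf_vec[OF assms(1)] by (auto simp: psd_def)

lemma triple_diag_entry:
  assumes U: "U \<in> carrier_mat n n" and j: "j < n" and k: "k < n"
  shows "(U * diagm n d * adj U) $$ (j,k) = (\<Sum>i<n. U $$ (j,i) * complex_of_real (d i) * cnj (U $$ (k,i)))"
proof -
  have UD: "U * diagm n d \<in> carrier_mat n n" using U by simp
  have e: "(U * diagm n d) $$ (j,i) = U $$ (j,i) * complex_of_real (d i)" if i: "i < n" for i
  proof -
    have "(U * diagm n d) $$ (j,i) = (\<Sum>l<n. U $$ (j,l) * diagm n d $$ (l,i))"
      by (rule mult_entry[OF U diagm_carrier j i])
    also have "\<dots> = (\<Sum>l<n. if l = i then U $$ (j,i) * complex_of_real (d i) else 0)"
      by (rule sum.cong, insert i, auto)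
    finally show ?thesis using i by simp
  qed
  show ?thesis
    by (subst mult_entry[OF UD adj_carrier[OF U] j k], rule sum.cong, insert U k, auto simp: e)
qed

lemma spectral_facts:
  assumes A: "A \<in> carrier_mat n n" and hA: "adj A = A"
  obtains U d where "U \<in> carrier_mat n n" "adj U * U = 1\<^sub>m n" "A = U * diagm n d * adj U"
    "\<And>j k. j < n \<Longrightarrow> k < n \<Longrightarrow> (\<Sum>i<n. U $$ (j,i) * cnj (U $$ (k,i))) = (if j = k then 1 else 0)"
    "\<And>i l. i < n \<Longrightarrow> l < n \<Longrightarrow> (\<Sum>j<n. cnj (U $$ (j,i)) * U $$ (j,l)) = (if i = l then 1 else 0)"
    "\<And>j k. j < n \<Longrightarrow> k < n \<Longrightarrow> A $$ (j,k) = (\<Sum>i<n. U $$ (j,i) * complex_of_real (d i) * cnj (U $$ (k,i)))"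
    "\<And>i. i < n \<Longrightarrow> qf n A (\<lambda>j. U $$ (j,i)) = complex_of_real (d i)"
proof -
  obtain U d where U: "U \<in> carrier_mat n n" and UU: "adj U * U = 1\<^sub>m n" and AU: "A = U * diagm n d * adj U"
    using spectral[OF A hA] by auto
  have UU': "U * adj U = 1\<^sub>m n" using unitary_right[OF U UU] .
  have F1: "(\<Sum>i<n. U $$ (j,i) * cnj (U $$ (k,i))) = (if j = k then 1 else 0)" if "j < n" "k < n" for j k
    using arg_cong[OF UU', of "\<lambda>X. X $$ (j,k)"] mult_entry[OF U adj_carrier[OF U] that] U that by simp
  have F2: "(\<Sum>j<n. cnj (U $$ (j,i)) * U $$ (j,l)) = (if i = l then 1 else 0)" if "i < n" "l < n" for i l
    using arg_cong[OF UU, of "\<lambda>X. X $$ (i,l)"] mult_entry[OF adj_carrier[OF U] U that] U that by simp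
  have F3: "A $$ (j,k) = (\<Sum>i<n. U $$ (j,i) * complex_of_real (d i) * cnj (U $$ (k,i)))" if "j < n" "k < n" for j k
    unfolding AU by (rule triple_diag_entry[OF U that])
  have F4: "qf n A (\<lambda>j. U $$ (j,i)) = complex_of_real (d i)" if i: "i < n" for i
  proof -
    have "qf n A (\<lambda>j. U $$ (j,i)) = (\<Sum>j<n. \<Sum>k<n. \<Sum>l<n. complex_of_real (d l) * (cnj (U $$ (j,i)) * U $$ (j,l)) * (cnj (U $$ (k,l)) * U $$ (k,i)))"
      unfolding qf_def by (intro sum.cong refl, simp add: F3 sum_distrib_left sum_distrib_right mult_ac)
    also have "\<dots> = (\<Sum>j<n. \<Sum>l<n. \<Sum>k<n. complex_of_real (d l) * (cnj (U $$ (j,i)) * U $$ (j,l)) * (cnj (U $$ (k,l)) * U $$ (k,i)))"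
      by (rule sum.cong[OF refl], rule sum.swap)
    also have "\<dots> = (\<Sum>l<n. \<Sum>j<n. \<Sum>k<n. complex_of_real (d l) * (cnj (U $$ (j,i)) * U $$ (j,l)) * (cnj (U $$ (k,l)) * U $$ (k,i)))"
      by (rule sum.swap)
    also have "\<dots> = (\<Sum>l<n. (\<Sum>j<n. complex_of_real (d l) * (cnj (U $$ (j,i)) * U $$ (j,l))) * (\<Sum>k<n. cnj (U $$ (k,l)) * U $$ (k,i)))"
      by (simp only: sum_product)
    also have "\<dots> = (\<Sum>l<n. complex_of_real (d l) * (\<Sum>j<n. cnj (U $$ (j,i)) * U $$ (j,l)) * (\<Sum>k<n. cnj (U $$ (k,l)) * U $$ (k,i)))"
      by (simp only: sum_distrib_left)
    also have "\<dots> = (\<Sum>l<n. if l = i then complex_of_real (d i) else 0)"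
      by (rule sum.cong, insert i, auto simp: F2)
    also have "\<dots> = complex_of_real (d i)" using i by simp
    finally show ?thesis .
  qed
  show ?thesis using that[OF U UU AU F1 F2 F3 F4] by blast
qed

lemma roots_sum:
  fixes as :: "complex list" and f :: "complex \<Rightarrow> real"
  assumes "finite S" "{z. poly (\<Prod>a\<leftarrow>as. [:- a, 1:]) z = 0} \<subseteq> S"
  shows "(\<Sum>z\<in>S. real (order z (\<Prod>a\<leftarrow>as. [:- a, 1:])) * f z) = (\<Sum>a\<leftarrow>as. f a)"
  using assms(2)
proof (induction as)
  case Nil
  show ?case by (simp add: order_0I)
next
  case (Cons a as)
  let ?q = "\<Prod>a\<leftarrow>as. [:- a, 1:]"
  have q0: "?q \<noteq> 0" by (auto simp: prod_list_zero_iff)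
  have l0: "[:- a, 1:] \<noteq> (0::complex poly)" by simp
  have p0: "[:- a, 1:] * ?q \<noteq> 0" using q0 l0 mult_eq_0_iff by blast
  have ord: "order z ([:- a, 1:] * ?q) = (if z = a then 1 else 0) + order z ?q" for z
  proof -
    have "order z [:- a, 1:] = (if z = a then 1 else 0)"
      using order_power_n_n[of a 1] by (auto intro: order_0I)
    thus ?thesis using order_mult[OF p0] by simp
  qed
  have aS: "a \<in> S" using Cons.prems by auto
  have sub: "{z. poly ?q z = 0} \<subseteq> S" using Cons.prems by auto
  have eq: "(\<Prod>x\<leftarrow>a # as. [:- x, 1:]) = [:- a, 1:] * ?q" by (simp only: list.map prod_list.Cons)
  have "(\<Sum>z\<in>S. real (order z (\<Prod>a\<leftarrow>a # as. [:- a, 1:])) * f z)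
      = (\<Sum>z\<in>S. (if z = a then f z else 0) + real (order z ?q) * f z)"
    unfolding eq by (rule sum.cong[OF refl], simp only: ord, simp add: algebra_simps)
  also have "\<dots> = (\<Sum>z\<in>S. (if z = a then f z else 0)) + (\<Sum>z\<in>S. real (order z ?q) * f z)"
    by (rule sum.distrib)
  also have "\<dots> = f a + (\<Sum>a\<leftarrow>as. f a)" using Cons.IH[OF sub] aS assms(1) by simp
  finally show ?case by simp
qed

lemma trace_norm_herm:
  assumes X: "X \<in> carrier_mat n n" and hX: "adj X = X"
    and U: "U \<in> carrier_mat n n" and UU: "adj U * U = 1\<^sub>m n" and XU: "X = U * diagm n d * adj U"
  shows "trace_norm X = (\<Sum>i<n. \<bar>d i\<bar>)"
proof -
  have UU': "U * adj U = 1\<^sub>m n" using unitary_right[OF U UU] .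
  let ?D = "diagm n d" and ?D2 = "diagm n (\<lambda>i. (d i)\<^sup>2)"
  have aU: "adj U \<in> carrier_mat n n" using U by simp
  have DD: "?D * ?D = ?D2"
  proof (rule eq_matI)
    fix i j assume "i < dim_row ?D2" "j < dim_col ?D2"
    hence i: "i < n" and j: "j < n" by auto
    show "(?D * ?D) $$ (i,j) = ?D2 $$ (i,j)"
      by (subst mult_entry[OF diagm_carrier diagm_carrier i j], insert i j,
          auto simp: if_distrib[of "\<lambda>x. x * _"] power2_eq_square cong: if_cong)
  qed auto
  have W: "U * ?D \<in> carrier_mat n n" using U by simp
  have "adj X * X = U * ?D * adj U * (U * ?D * adj U)" using hX XU by simp
  also have "\<dots> = U * ?D * (adj U * (U * ?D * adj U))"
    by (rule assoc_mult_mat[OF W aU mult_carrier_mat[OF W aU]])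
  also have "adj U * (U * ?D * adj U) = adj U * (U * ?D) * adj U"
    by (rule assoc_mult_mat[OF aU W aU, symmetric])
  also have "adj U * (U * ?D) = ?D"
    using assoc_mult_mat[OF aU U diagm_carrier, symmetric] UU by simp
  also have "U * ?D * (?D * adj U) = U * ?D * ?D * adj U"
    by (rule assoc_mult_mat[OF W diagm_carrier aU, symmetric])
  also have "U * ?D * ?D = U * ?D2"
    using assoc_mult_mat[OF U diagm_carrier diagm_carrier] DD by simp
  finally have XX: "adj X * X = U * ?D2 * adj U" .
  have "similar_mat (adj X * X) ?D2"
    unfolding similar_mat_def similar_mat_wit_def
    by (rule exI[of _ U], rule exI[of _ "adj U"], insert XX U UU UU' X mult_carrier_mat[OF mult_carrier_mat[OF U diagm_carrier] aU], simp add: Let_def)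
  hence cp: "char_poly (adj X * X) = char_poly ?D2" by (rule char_poly_similar)
  have ut: "upper_triangular ?D2" unfolding upper_triangular_def by auto
  have dm: "diag_mat ?D2 = map (\<lambda>i. complex_of_real ((d i)\<^sup>2)) [0..<n]"
    unfolding diag_mat_def by auto
  have cp2: "char_poly (adj X * X) = (\<Prod>a\<leftarrow>map (\<lambda>i. complex_of_real ((d i)\<^sup>2)) [0..<n]. [:- a, 1:])"
    unfolding cp char_poly_upper_triangular[OF diagm_carrier ut] dm ..
  let ?p = "(\<Prod>a\<leftarrow>map (\<lambda>i. complex_of_real ((d i)\<^sup>2)) [0..<n]. [:- a, 1:])"
  have p0: "?p \<noteq> 0" by (auto simp: prod_list_zero_iff)
  have "trace_norm X = (\<Sum>z\<in>{z. poly ?p z = 0}. real (order z ?p) * sqrt (Re z))"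
    unfolding trace_norm_def cp2 Let_def ..
  also have "\<dots> = (\<Sum>a\<leftarrow>map (\<lambda>i. complex_of_real ((d i)\<^sup>2)) [0..<n]. sqrt (Re a))"
    by (rule roots_sum[OF poly_roots_finite[OF p0] subset_refl])
  also have "\<dots> = (\<Sum>i<n. \<bar>d i\<bar>)"
    by (simp add: sum_list_distinct_conv_sum_set atLeast0LessThan o_def)
  finally show ?thesis .
qed

lemma psd_carrier: "psd n A \<Longrightarrow> A \<in> carrier_mat n n" by (simp add: psd_def)
lemma psd_herm: "psd n A \<Longrightarrow> adj A = A" by (simp add: psd_def)

lemma psd_decomp:
  assumes p: "psd n A"
  shows "\<exists>ws. \<forall>j<n. \<forall>k<n. A $$ (j,k) = (\<Sum>w\<leftarrow>ws. w j * cnj (w k))"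
proof -
  obtain U d where U: "U \<in> carrier_mat n n" and UU: "adj U * U = 1\<^sub>m n" and AU: "A = U * diagm n d * adj U"
    and F1: "\<And>j k. j < n \<Longrightarrow> k < n \<Longrightarrow> (\<Sum>i<n. U $$ (j,i) * cnj (U $$ (k,i))) = (if j = k then 1 else 0)"
    and F2: "\<And>i l. i < n \<Longrightarrow> l < n \<Longrightarrow> (\<Sum>j<n. cnj (U $$ (j,i)) * U $$ (j,l)) = (if i = l then 1 else 0)"
    and F3: "\<And>j k. j < n \<Longrightarrow> k < n \<Longrightarrow> A $$ (j,k) = (\<Sum>i<n. U $$ (j,i) * complex_of_real (d i) * cnj (U $$ (k,i)))"
    and F4: "\<And>i. i < n \<Longrightarrow> qf n A (\<lambda>j. U $$ (j,i)) = complex_of_real (d i)"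
    by (rule spectral_facts[OF psd_carrier[OF p] psd_herm[OF p]], blast)
  have d0: "0 \<le> d i" if "i < n" for i using psd_qf[OF p, of "\<lambda>j. U $$ (j,i)"] F4[OF that] by simp
  define ws where "ws = map (\<lambda>i j. complex_of_real (sqrt (d i)) * U $$ (j,i)) [0..<n]"
  have "A $$ (j,k) = (\<Sum>w\<leftarrow>ws. w j * cnj (w k))" if j: "j < n" and k: "k < n" for j k
  proof -
    have "(\<Sum>w\<leftarrow>ws. w j * cnj (w k)) = (\<Sum>i<n. complex_of_real (sqrt (d i)) * U $$ (j,i) * cnj (complex_of_real (sqrt (d i)) * U $$ (k,i)))"
      by (simp add: ws_def sum_list_distinct_conv_sum_set atLeast0LessThan o_def)
    also have "\<dots> = (\<Sum>i<n. U $$ (j,i) * complex_of_real (d i) * cnj (U $$ (k,i)))"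
    proof (rule sum.cong[OF refl])
      fix i assume "i \<in> {..<n}"
      hence "0 \<le> d i" using d0 by auto
      hence "complex_of_real (sqrt (d i)) * complex_of_real (sqrt (d i)) = complex_of_real (d i)"
        by (simp flip: of_real_mult)
      thus "complex_of_real (sqrt (d i)) * U $$ (j,i) * cnj (complex_of_real (sqrt (d i)) * U $$ (k,i))
          = U $$ (j,i) * complex_of_real (d i) * cnj (U $$ (k,i))"
        by (simp add: mult_ac)
    qed
    finally show ?thesis using F3[OF j k] by simp
  qed
  thus ?thesis by blast
qed

lemma qf_trace:
  assumes F1: "\<And>j k. j < n \<Longrightarrow> k < n \<Longrightarrow> (\<Sum>i<n. U $$ (j,i) * cnj (U $$ (k,i))) = (if j = k then 1 else 0)"
  shows "(\<Sum>i<n. qf n A (\<lambda>j. U $$ (j,i))) = (\<Sum>j<n. A $$ (j,j))"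
proof -
  have "(\<Sum>i<n. qf n A (\<lambda>j. U $$ (j,i))) = (\<Sum>i<n. \<Sum>j<n. \<Sum>k<n. A $$ (j,k) * (U $$ (k,i) * cnj (U $$ (j,i))))"
    unfolding qf_def by (intro sum.cong refl, simp add: mult_ac)
  also have "\<dots> = (\<Sum>j<n. \<Sum>i<n. \<Sum>k<n. A $$ (j,k) * (U $$ (k,i) * cnj (U $$ (j,i))))"
    by (rule sum.swap)
  also have "\<dots> = (\<Sum>j<n. \<Sum>k<n. \<Sum>i<n. A $$ (j,k) * (U $$ (k,i) * cnj (U $$ (j,i))))"
    by (rule sum.cong[OF refl], rule sum.swap)
  also have "\<dots> = (\<Sum>j<n. \<Sum>k<n. A $$ (j,k) * (\<Sum>i<n. U $$ (k,i) * cnj (U $$ (j,i))))"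
    by (simp only: sum_distrib_left)
  also have "\<dots> = (\<Sum>j<n. \<Sum>k<n. if k = j then A $$ (j,j) else 0)"
    by (intro sum.cong refl, simp add: F1)
  also have "\<dots> = (\<Sum>j<n. A $$ (j,j))" by simp
  finally show ?thesis .
qed

lemma abs_diff_helper:
  fixes a b c :: real
  assumes "0 \<le> c" "0 \<le> a" "0 \<le> b"
  shows "\<bar>c * (a - b)\<bar> \<le> c * (a + b)"
proof -
  have "\<bar>a - b\<bar> \<le> a + b" using assms by arith
  hence "c * \<bar>a - b\<bar> \<le> c * (a + b)" using assms(1) by (rule mult_left_mono)
  thus ?thesis using assms(1) by (simp add: abs_mult)
qed

lemma mtrace_sum: "A \<in> carrier_mat n n \<Longrightarrow> mtrace A = (\<Sum>j<n. A $$ (j,j))"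
  by (simp add: mtrace_def)

lemma TN_upper:
  assumes pA: "psd m A" and pB: "psd m B" and tA: "mtrace A = 1" and tB: "mtrace B = 1" and c: "0 \<le> c"
  shows "trace_norm (complex_of_real c \<cdot>\<^sub>m (A - B)) \<le> 2 * c"
proof -
  let ?X = "complex_of_real c \<cdot>\<^sub>m (A - B)"
  have A: "A \<in> carrier_mat m m" and B: "B \<in> carrier_mat m m" using pA pB by (auto simp: psd_def)
  have X: "?X \<in> carrier_mat m m" using A B by (simp add: minus_carrier_mat)
  have Xe: "?X $$ (j,k) = complex_of_real c * (A $$ (j,k) - B $$ (j,k))" if "j < m" "k < m" for j k
    using A B that by simp
  have hX: "adj ?X = ?X"
  proof (rule eq_matI)
    fix i j assume "i < dim_row ?X" "j < dim_col ?X"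
    hence i: "i < m" and j: "j < m" using A B by auto
    have "cnj (A $$ (j,i)) = A $$ (i,j)" "cnj (B $$ (j,i)) = B $$ (i,j)"
      using arg_cong[OF psd_herm[OF pA], of "\<lambda>X. X $$ (i,j)"] arg_cong[OF psd_herm[OF pB], of "\<lambda>X. X $$ (i,j)"] A B i j by auto
    thus "adj ?X $$ (i,j) = ?X $$ (i,j)" using i j A B by simp
  qed (insert A B, auto)
  obtain U d where U: "U \<in> carrier_mat m m" and UU: "adj U * U = 1\<^sub>m m" and XU: "?X = U * diagm m d * adj U"
    and F1: "\<And>j k. j < m \<Longrightarrow> k < m \<Longrightarrow> (\<Sum>i<m. U $$ (j,i) * cnj (U $$ (k,i))) = (if j = k then 1 else 0)"
    and F2: "\<And>i l. i < m \<Longrightarrow> l < m \<Longrightarrow> (\<Sum>j<m. cnj (U $$ (j,i)) * U $$ (j,l)) = (if i = l then 1 else 0)"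
    and F3: "\<And>j k. j < m \<Longrightarrow> k < m \<Longrightarrow> ?X $$ (j,k) = (\<Sum>i<m. U $$ (j,i) * complex_of_real (d i) * cnj (U $$ (k,i)))"
    and F4: "\<And>i. i < m \<Longrightarrow> qf m ?X (\<lambda>j. U $$ (j,i)) = complex_of_real (d i)"
    by (rule spectral_facts[OF X hX], blast)
  have tn: "trace_norm ?X = (\<Sum>i<m. \<bar>d i\<bar>)" by (rule trace_norm_herm[OF X hX U UU XU])
  have qfX: "qf m ?X x = complex_of_real c * (qf m A x - qf m B x)" for x
  proof -
    have "qf m ?X x = (\<Sum>j<m. \<Sum>k<m. complex_of_real c * (cnj (x j) * A $$ (j,k) * x k) - complex_of_real c * (cnj (x j) * B $$ (j,k) * x k))"
      unfolding qf_def by (intro sum.cong refl, simp add: Xe algebra_simps)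
    also have "\<dots> = complex_of_real c * (qf m A x - qf m B x)"
      unfolding qf_def by (simp only: sum_subtractf sum_distrib_left right_diff_distrib)
    finally show ?thesis .
  qed
  have bd: "\<bar>d i\<bar> \<le> c * (Re (qf m A (\<lambda>j. U $$ (j,i))) + Re (qf m B (\<lambda>j. U $$ (j,i))))" if i: "i < m" for i
  proof -
    have "d i = Re (complex_of_real (d i))" by simp
    also have "\<dots> = c * (Re (qf m A (\<lambda>j. U $$ (j,i))) - Re (qf m B (\<lambda>j. U $$ (j,i))))"
      unfolding F4[OF i, symmetric] qfX by simp
    finally have "d i = \<dots>" .
    moreover have "0 \<le> Re (qf m A (\<lambda>j. U $$ (j,i)))" "0 \<le> Re (qf m B (\<lambda>j. U $$ (j,i)))"
      using psd_qf[OF pA] psd_qf[OF pB] by auto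
    ultimately show ?thesis using abs_diff_helper[OF c] by simp
  qed
  have "trace_norm ?X \<le> (\<Sum>i<m. c * (Re (qf m A (\<lambda>j. U $$ (j,i))) + Re (qf m B (\<lambda>j. U $$ (j,i)))))"
    unfolding tn by (rule sum_mono, simp add: bd)
  also have "\<dots> = c * (Re (\<Sum>i<m. qf m A (\<lambda>j. U $$ (j,i))) + Re (\<Sum>i<m. qf m B (\<lambda>j. U $$ (j,i))))"
    by (simp only: Re_sum sum.distrib[symmetric] sum_distrib_left)
  also have "\<dots> = c * (Re (mtrace A) + Re (mtrace B))"
    by (simp only: qf_trace[of m U, OF F1] mtrace_sum[OF A] mtrace_sum[OF B])
  also have "\<dots> = 2 * c" using tA tB by simp
  finally show ?thesis .
qed

lemma TN_lower:
  assumes X: "X \<in> carrier_mat m m" and hX: "adj X = X"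
  shows "(\<Sum>j<m. cmod (X $$ (j,j))) \<le> trace_norm X"
proof -
  obtain U d where U: "U \<in> carrier_mat m m" and UU: "adj U * U = 1\<^sub>m m" and XU: "X = U * diagm m d * adj U"
    and F1: "\<And>j k. j < m \<Longrightarrow> k < m \<Longrightarrow> (\<Sum>i<m. U $$ (j,i) * cnj (U $$ (k,i))) = (if j = k then 1 else 0)"
    and F2: "\<And>i l. i < m \<Longrightarrow> l < m \<Longrightarrow> (\<Sum>j<m. cnj (U $$ (j,i)) * U $$ (j,l)) = (if i = l then 1 else 0)"
    and F3: "\<And>j k. j < m \<Longrightarrow> k < m \<Longrightarrow> X $$ (j,k) = (\<Sum>i<m. U $$ (j,i) * complex_of_real (d i) * cnj (U $$ (k,i)))"
    and F4: "\<And>i. i < m \<Longrightarrow> qf m X (\<lambda>j. U $$ (j,i)) = complex_of_real (d i)"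
    by (rule spectral_facts[OF X hX], blast)
  have tn: "trace_norm X = (\<Sum>i<m. \<bar>d i\<bar>)" by (rule trace_norm_herm[OF X hX U UU XU])
  have n1: "(\<Sum>j<m. (cmod (U $$ (j,i)))\<^sup>2) = 1" if i: "i < m" for i
  proof -
    have "complex_of_real (\<Sum>j<m. (cmod (U $$ (j,i)))\<^sup>2) = (\<Sum>j<m. cnj (U $$ (j,i)) * U $$ (j,i))"
      by (simp add: cnj_mult_self)
    also have "\<dots> = 1" using F2[OF i i] by simp
    finally show ?thesis by (metis of_real_eq_1_iff)
  qed
  have "(\<Sum>j<m. cmod (X $$ (j,j))) \<le> (\<Sum>j<m. \<Sum>i<m. \<bar>d i\<bar> * (cmod (U $$ (j,i)))\<^sup>2)"
  proof (rule sum_mono)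
    fix j assume "j \<in> {..<m}"
    hence j: "j < m" by simp
    have "cmod (X $$ (j,j)) \<le> (\<Sum>i<m. cmod (U $$ (j,i) * complex_of_real (d i) * cnj (U $$ (j,i))))"
      unfolding F3[OF j j] by (rule norm_sum)
    also have "\<dots> = (\<Sum>i<m. \<bar>d i\<bar> * (cmod (U $$ (j,i)))\<^sup>2)"
      by (simp add: norm_mult power2_eq_square mult_ac)
    finally show "cmod (X $$ (j,j)) \<le> (\<Sum>i<m. \<bar>d i\<bar> * (cmod (U $$ (j,i)))\<^sup>2)" .
  qed
  also have "\<dots> = (\<Sum>i<m. \<bar>d i\<bar> * (\<Sum>j<m. (cmod (U $$ (j,i)))\<^sup>2))"
    by (subst sum.swap, simp only: sum_distrib_left)
  also have "\<dots> = trace_norm X" unfolding tn by (simp add: n1)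
  finally show ?thesis .
qed

lemma sum_list_sum_swap:
  "(\<Sum>K\<leftarrow>Ks. \<Sum>i\<in>I. f K i) = (\<Sum>i\<in>I. \<Sum>K\<leftarrow>Ks. f K i)"
  by (induction Ks, auto simp: sum.distrib)

lemma sum_list_mult_left: "c * (\<Sum>K\<leftarrow>Ks. f K) = (\<Sum>K\<leftarrow>Ks. c * f K)" for c :: complex
  by (induction Ks, auto simp: algebra_simps)

lemma sum_list_mult_right: "(\<Sum>K\<leftarrow>Ks. f K) * c = (\<Sum>K\<leftarrow>Ks. f K * c)" for c :: complex
  by (induction Ks, auto simp: algebra_simps)

lemma sum_list_cong': "(\<And>K. K \<in> set Ks \<Longrightarrow> f K = g K) \<Longrightarrow> (\<Sum>K\<leftarrow>Ks. f K) = (\<Sum>K\<leftarrow>Ks. g K)"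
  by (induction Ks, auto)

lemma cnj_sum_list: "cnj (\<Sum>K\<leftarrow>Ks. f K) = (\<Sum>K\<leftarrow>Ks. cnj (f K))"
  by (induction Ks, auto)

lemma Re_sum_list: "Re (\<Sum>K\<leftarrow>Ks. f K) = (\<Sum>K\<leftarrow>Ks. Re (f K))"
  by (induction Ks, auto)

lemma sum_list_cnj_nonneg: "0 \<le> Re (\<Sum>K\<leftarrow>Ks. cnj (f K) * f K)"
proof (induction Ks)
  case (Cons a Ks)
  have "0 \<le> Re (cnj (f a) * f a)" by (simp only: cnj_mult_self Re_complex_of_real) simp
  thus ?case using Cons by simp
qed simp

lemma foldr_entry:
  assumes "\<forall>K\<in>set Ks. f K \<in> carrier_mat r r"
  shows "foldr (\<lambda>K acc. f K + acc) Ks (0\<^sub>m r r) \<in> carrier_mat r r \<and>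
    (\<forall>i<r. \<forall>j<r. foldr (\<lambda>K acc. f K + acc) Ks (0\<^sub>m r r) $$ (i,j) = (\<Sum>K\<leftarrow>Ks. f K $$ (i,j)))"
  using assms by (induction Ks, auto)

lemma KAK_carrier: "\<forall>K\<in>set Ks. K \<in> carrier_mat m n \<Longrightarrow> A \<in> carrier_mat n n \<Longrightarrow> \<forall>K\<in>set Ks. K * A * adj K \<in> carrier_mat m m"
  by (metis mult_carrier_mat adj_carrier)

lemma KK_carrier: "\<forall>K\<in>set Ks. K \<in> carrier_mat m n \<Longrightarrow> \<forall>K\<in>set Ks. adj K * K \<in> carrier_mat n n"
  by (metis mult_carrier_mat adj_carrier)

lemma KAK_entry:
  assumes K: "K \<in> carrier_mat m n" and A: "A \<in> carrier_mat n n" and i: "i < m" and j: "j < m"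
  shows "(K * A * adj K) $$ (i,j) = (\<Sum>k<n. \<Sum>l<n. K $$ (i,k) * A $$ (k,l) * cnj (K $$ (j,l)))"
proof -
  have KA: "K * A \<in> carrier_mat m n" using K A by simp
  have "(K * A * adj K) $$ (i,j) = (\<Sum>l<n. (K * A) $$ (i,l) * adj K $$ (l,j))"
    by (rule mult_entry[OF KA adj_carrier[OF K] i j])
  also have "\<dots> = (\<Sum>l<n. \<Sum>k<n. K $$ (i,k) * A $$ (k,l) * cnj (K $$ (j,l)))"
    by (rule sum.cong[OF refl], insert K j, simp add: mult_entry[OF K A i] sum_distrib_right)
  also have "\<dots> = (\<Sum>k<n. \<Sum>l<n. K $$ (i,k) * A $$ (k,l) * cnj (K $$ (j,l)))"
    by (rule sum.swap)
  finally show ?thesis .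
qed

lemma KK_entry:
  assumes K: "K \<in> carrier_mat m n" and k: "k < n" and l: "l < n"
  shows "(adj K * K) $$ (k,l) = (\<Sum>i<m. cnj (K $$ (i,k)) * K $$ (i,l))"
  by (subst mult_entry[OF adj_carrier[OF K] K k l], rule sum.cong, insert K k l, auto)

lemma kraus_props:
  assumes Ks: "\<forall>K\<in>set Ks. K \<in> carrier_mat m n" and A: "A \<in> carrier_mat n n"
  shows "kraus_apply m Ks A \<in> carrier_mat m m"
    "\<And>i j. i < m \<Longrightarrow> j < m \<Longrightarrow> kraus_apply m Ks A $$ (i,j) =
        (\<Sum>K\<leftarrow>Ks. \<Sum>k<n. \<Sum>l<n. K $$ (i,k) * A $$ (k,l) * cnj (K $$ (j,l)))"
proof -
  have c: "\<forall>K\<in>set Ks. K * A * adj K \<in> carrier_mat m m" by (rule KAK_carrier[OF Ks A])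
  note fe = foldr_entry[OF c]
  show "kraus_apply m Ks A \<in> carrier_mat m m" using fe unfolding kraus_apply_def by blast
  fix i j assume i: "i < m" and j: "j < m"
  have "kraus_apply m Ks A $$ (i,j) = (\<Sum>K\<leftarrow>Ks. (K * A * adj K) $$ (i,j))"
    using fe i j unfolding kraus_apply_def by blast
  also have "\<dots> = (\<Sum>K\<leftarrow>Ks. \<Sum>k<n. \<Sum>l<n. K $$ (i,k) * A $$ (k,l) * cnj (K $$ (j,l)))"
    by (rule arg_cong[where f = sum_list], rule map_cong[OF refl], rule KAK_entry, insert Ks A i j, auto)
  finally show "kraus_apply m Ks A $$ (i,j) = (\<Sum>K\<leftarrow>Ks. \<Sum>k<n. \<Sum>l<n. K $$ (i,k) * A $$ (k,l) * cnj (K $$ (j,l)))" .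
qed

lemma KK_props:
  assumes Ks: "\<forall>K\<in>set Ks. K \<in> carrier_mat m n"
    and S: "foldr (\<lambda>K acc. adj K * K + acc) Ks (0\<^sub>m n n) = 1\<^sub>m n"
  shows "\<And>k l. k < n \<Longrightarrow> l < n \<Longrightarrow> (\<Sum>K\<leftarrow>Ks. \<Sum>i<m. cnj (K $$ (i,k)) * K $$ (i,l)) = (if k = l then 1 else 0)"
proof -
  fix k l assume k: "k < n" and l: "l < n"
  have c: "\<forall>K\<in>set Ks. adj K * K \<in> carrier_mat n n" by (rule KK_carrier[OF Ks])
  note fe = foldr_entry[OF c]
  have "(if k = l then 1 else 0) = (\<Sum>K\<leftarrow>Ks. (adj K * K) $$ (k,l))"
    using fe k l S by auto
  also have "\<dots> = (\<Sum>K\<leftarrow>Ks. \<Sum>i<m. cnj (K $$ (i,k)) * K $$ (i,l))"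
    by (rule arg_cong[where f = sum_list], rule map_cong[OF refl], rule KK_entry, insert Ks k l, auto)
  finally show "(\<Sum>K\<leftarrow>Ks. \<Sum>i<m. cnj (K $$ (i,k)) * K $$ (i,l)) = (if k = l then 1 else 0)" by simp
qed

lemma kraus_trace:
  assumes Ks: "\<forall>K\<in>set Ks. K \<in> carrier_mat m n" and A: "A \<in> carrier_mat n n"
    and S: "foldr (\<lambda>K acc. adj K * K + acc) Ks (0\<^sub>m n n) = 1\<^sub>m n"
  shows "(\<Sum>i<m. kraus_apply m Ks A $$ (i,i)) = (\<Sum>k<n. A $$ (k,k))"
proof -
  have "(\<Sum>i<m. kraus_apply m Ks A $$ (i,i)) = (\<Sum>i<m. \<Sum>K\<leftarrow>Ks. \<Sum>k<n. \<Sum>l<n. K $$ (i,k) * A $$ (k,l) * cnj (K $$ (i,l)))"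
    by (rule sum.cong, simp_all add: kraus_props(2)[OF Ks A])
  also have "\<dots> = (\<Sum>K\<leftarrow>Ks. \<Sum>i<m. \<Sum>k<n. \<Sum>l<n. K $$ (i,k) * A $$ (k,l) * cnj (K $$ (i,l)))"
    by (rule sum_list_sum_swap[symmetric])
  also have "\<dots> = (\<Sum>K\<leftarrow>Ks. \<Sum>k<n. \<Sum>l<n. A $$ (k,l) * (\<Sum>i<m. cnj (K $$ (i,l)) * K $$ (i,k)))"
  proof (rule sum_list_cong')
    fix K
    have "(\<Sum>i<m. \<Sum>k<n. \<Sum>l<n. K $$ (i,k) * A $$ (k,l) * cnj (K $$ (i,l)))
        = (\<Sum>k<n. \<Sum>i<m. \<Sum>l<n. K $$ (i,k) * A $$ (k,l) * cnj (K $$ (i,l)))" by (rule sum.swap)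
    also have "\<dots> = (\<Sum>k<n. \<Sum>l<n. \<Sum>i<m. K $$ (i,k) * A $$ (k,l) * cnj (K $$ (i,l)))"
      by (rule sum.cong[OF refl], rule sum.swap)
    also have "\<dots> = (\<Sum>k<n. \<Sum>l<n. A $$ (k,l) * (\<Sum>i<m. cnj (K $$ (i,l)) * K $$ (i,k)))"
      by (simp only: sum_distrib_left, intro sum.cong refl, simp only: mult_ac)
    finally show "(\<Sum>i<m. \<Sum>k<n. \<Sum>l<n. K $$ (i,k) * A $$ (k,l) * cnj (K $$ (i,l)))
        = (\<Sum>k<n. \<Sum>l<n. A $$ (k,l) * (\<Sum>i<m. cnj (K $$ (i,l)) * K $$ (i,k)))" .
  qed
  also have "\<dots> = (\<Sum>k<n. \<Sum>l<n. A $$ (k,l) * (\<Sum>K\<leftarrow>Ks. \<Sum>i<m. cnj (K $$ (i,l)) * K $$ (i,k)))"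
    by (simp only: sum_list_sum_swap sum_list_mult_left[symmetric])
  also have "\<dots> = (\<Sum>k<n. \<Sum>l<n. if l = k then A $$ (k,k) else 0)"
    by (intro sum.cong refl, simp add: KK_props[OF Ks S])
  also have "\<dots> = (\<Sum>k<n. A $$ (k,k))" by simp
  finally show ?thesis .
qed

lemma kraus_herm:
  assumes Ks: "\<forall>K\<in>set Ks. K \<in> carrier_mat m n" and A: "A \<in> carrier_mat n n" and hA: "adj A = A"
  shows "adj (kraus_apply m Ks A) = kraus_apply m Ks A"
proof -
  note E = kraus_props[OF Ks A]
  have Ah: "cnj (A $$ (k,l)) = A $$ (l,k)" if "k < n" "l < n" for k l
    using arg_cong[OF hA, of "\<lambda>X. X $$ (l,k)"] A that by simp
  show ?thesis
  proof (rule eq_matI)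
    fix i j assume "i < dim_row (kraus_apply m Ks A)" "j < dim_col (kraus_apply m Ks A)"
    hence i: "i < m" and j: "j < m" using E(1) by auto
    have "adj (kraus_apply m Ks A) $$ (i,j) = cnj (kraus_apply m Ks A $$ (j,i))" using E(1) i j by simp
    also have "\<dots> = (\<Sum>K\<leftarrow>Ks. \<Sum>k<n. \<Sum>l<n. cnj (K $$ (j,k)) * A $$ (l,k) * K $$ (i,l))"
      unfolding E(2)[OF j i] cnj_sum_list
      by (rule arg_cong[where f = sum_list], rule map_cong[OF refl], simp add: Ah)
    also have "\<dots> = (\<Sum>K\<leftarrow>Ks. \<Sum>l<n. \<Sum>k<n. K $$ (i,l) * A $$ (l,k) * cnj (K $$ (j,k)))"
      by (rule sum_list_cong', subst sum.swap, simp only: mult_ac)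
    also have "\<dots> = kraus_apply m Ks A $$ (i,j)" unfolding E(2)[OF i j] ..
    finally show "adj (kraus_apply m Ks A) $$ (i,j) = kraus_apply m Ks A $$ (i,j)" .
  qed (insert E(1), auto)
qed

definition Rrow :: "nat \<Rightarrow> complex mat list \<Rightarrow> nat \<Rightarrow> complex mat" where
  "Rrow r Ks n = mat n n (\<lambda>(l,k). \<Sum>K\<leftarrow>Ks. cnj (K $$ (r,l)) * K $$ (r,k))"

lemma Rrow_psd: "psd n (Rrow r Ks n)"
proof (rule qf_psd)
  show "Rrow r Ks n \<in> carrier_mat n n" by (simp add: Rrow_def)
  show "adj (Rrow r Ks n) = Rrow r Ks n"
    by (rule eq_matI, auto simp: Rrow_def cnj_sum_list mult.commute)
  fix x
  have Re: "Rrow r Ks n $$ (l,k) = (\<Sum>K\<leftarrow>Ks. cnj (K $$ (r,l)) * K $$ (r,k))" if "l < n" "k < n" for l k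
    using that by (simp add: Rrow_def)
  have "qf n (Rrow r Ks n) x = (\<Sum>K\<leftarrow>Ks. cnj (\<Sum>k<n. K $$ (r,k) * x k) * (\<Sum>k<n. K $$ (r,k) * x k))"
  proof -
    have "qf n (Rrow r Ks n) x = (\<Sum>l<n. \<Sum>k<n. \<Sum>K\<leftarrow>Ks. cnj (K $$ (r,l) * x l) * (K $$ (r,k) * x k))"
      unfolding qf_def
      by (intro sum.cong refl, unfold lessThan_iff, simp only: Re sum_list_mult_left sum_list_mult_right, rule sum_list_cong', simp add: mult_ac)
    also have "\<dots> = (\<Sum>K\<leftarrow>Ks. \<Sum>l<n. \<Sum>k<n. cnj (K $$ (r,l) * x l) * (K $$ (r,k) * x k))"
      by (simp only: sum_list_sum_swap)
    also have "\<dots> = (\<Sum>K\<leftarrow>Ks. cnj (\<Sum>k<n. K $$ (r,k) * x k) * (\<Sum>k<n. K $$ (r,k) * x k))"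
      by (simp only: sum_product cnj_sum)
    finally show ?thesis .
  qed
  also have "0 \<le> Re \<dots>" by (rule sum_list_cnj_nonneg)
  finally show "0 \<le> Re (qf n (Rrow r Ks n) x)" .
qed

lemma sum_list_add': "(\<Sum>K\<leftarrow>Ks. f K + g K) = (\<Sum>K\<leftarrow>Ks. f K) + (\<Sum>K\<leftarrow>Ks. g K)" for f g :: "_ \<Rightarrow> complex"
  by (induction Ks, auto)

lemma sum2: "(\<Sum>i<(2::nat). f i) = f 0 + f 1" for f :: "nat \<Rightarrow> 'a::comm_monoid_add"
  by (simp add: numeral_2_eq_2)

lemma mtrace_mult:
  assumes A: "A \<in> carrier_mat n n" and Q: "Q \<in> carrier_mat n n"
  shows "mtrace (A * Q) = (\<Sum>k<n. \<Sum>l<n. A $$ (k,l) * Q $$ (l,k))"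
proof -
  have d: "dim_row (A * Q) = n" using A by simp
  show ?thesis unfolding mtrace_def d by (intro sum.cong refl, rule mult_entry[OF A Q], auto)
qed

lemma trace_Rrow:
  assumes Ks: "\<forall>K\<in>set Ks. K \<in> carrier_mat m n" and A: "A \<in> carrier_mat n n" and r: "r < m"
  shows "mtrace (A * Rrow r Ks n) = kraus_apply m Ks A $$ (r,r)"
proof -
  have R: "Rrow r Ks n \<in> carrier_mat n n" by (simp add: Rrow_def)
  have "mtrace (A * Rrow r Ks n) = (\<Sum>k<n. \<Sum>l<n. A $$ (k,l) * (\<Sum>K\<leftarrow>Ks. cnj (K $$ (r,l)) * K $$ (r,k)))"
    unfolding mtrace_mult[OF A R] by (intro sum.cong refl, simp add: Rrow_def)
  also have "\<dots> = (\<Sum>k<n. \<Sum>l<n. \<Sum>K\<leftarrow>Ks. K $$ (r,k) * A $$ (k,l) * cnj (K $$ (r,l)))"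
    by (intro sum.cong refl, simp only: sum_list_mult_left, rule sum_list_cong', simp only: mult_ac)
  also have "\<dots> = kraus_apply m Ks A $$ (r,r)"
    unfolding kraus_props(2)[OF Ks A r r] by (simp only: sum_list_sum_swap)
  finally show ?thesis .
qed

lemma one_minus_Rrow:
  assumes Ks: "\<forall>K\<in>set Ks. K \<in> carrier_mat 2 n"
    and S: "foldr (\<lambda>K acc. adj K * K + acc) Ks (0\<^sub>m n n) = 1\<^sub>m n"
  shows "1\<^sub>m n - Rrow 0 Ks n = Rrow 1 Ks n"
proof (rule eq_matI)
  fix l k assume "l < dim_row (Rrow 1 Ks n)" "k < dim_col (Rrow 1 Ks n)"
  hence l: "l < n" and k: "k < n" by (auto simp: Rrow_def)
  have "(if l = k then 1 else 0) = (\<Sum>K\<leftarrow>Ks. cnj (K $$ (0,l)) * K $$ (0,k)) + (\<Sum>K\<leftarrow>Ks. cnj (K $$ (1,l)) * K $$ (1,k))"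
    using KK_props[OF Ks S l k] by (simp only: sum2 sum_list_add')
  thus "(1\<^sub>m n - Rrow 0 Ks n) $$ (l,k) = Rrow 1 Ks n $$ (l,k)"
    using l k by (auto simp: Rrow_def)
qed (auto simp: Rrow_def)

lemma qf_real:
  assumes A: "A \<in> carrier_mat n n" and hA: "adj A = A"
  shows "Im (qf n A x) = 0"
proof -
  have Ah: "cnj (A $$ (k,l)) = A $$ (l,k)" if "k < n" "l < n" for k l
    using arg_cong[OF hA, of "\<lambda>X. X $$ (l,k)"] A that by simp
  have "cnj (qf n A x) = (\<Sum>j<n. \<Sum>k<n. x j * A $$ (k,j) * cnj (x k))"
    unfolding qf_def cnj_sum by (intro sum.cong refl, simp add: Ah)
  also have "\<dots> = qf n A x" unfolding qf_def by (subst sum.swap, simp only: mult_ac)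
  finally show ?thesis by (metis Reals_cnj_iff complex_is_Real_iff)
qed

lemma trQ:
  assumes A: "A \<in> carrier_mat n n" and Q: "Q \<in> carrier_mat n n"
    and gs: "\<forall>j<n. \<forall>k<n. Q $$ (j,k) = (\<Sum>g\<leftarrow>gs. g j * cnj (g k))"
  shows "mtrace (A * Q) = (\<Sum>g\<leftarrow>gs. qf n A g)"
proof -
  have "mtrace (A * Q) = (\<Sum>k<n. \<Sum>l<n. \<Sum>g\<leftarrow>gs. cnj (g k) * A $$ (k,l) * g l)"
    unfolding mtrace_mult[OF A Q]
    by (intro sum.cong refl, simp only: lessThan_iff gs sum_list_mult_left, rule sum_list_cong', simp only: mult_ac)
  also have "\<dots> = (\<Sum>g\<leftarrow>gs. qf n A g)" unfolding qf_def by (simp only: sum_list_sum_swap)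
  finally show ?thesis .
qed

lemma psd_trQ:
  assumes pA: "psd n A" and pQ: "psd n Q"
  shows "0 \<le> Re (mtrace (A * Q)) \<and> Im (mtrace (A * Q)) = 0"
proof -
  obtain gs where gs: "\<forall>j<n. \<forall>k<n. Q $$ (j,k) = (\<Sum>g\<leftarrow>gs. g j * cnj (g k))"
    using psd_decomp[OF pQ] by blast
  have t: "mtrace (A * Q) = (\<Sum>g\<leftarrow>gs. qf n A g)" by (rule trQ[OF psd_carrier[OF pA] psd_carrier[OF pQ] gs])
  have "0 \<le> Re (\<Sum>g\<leftarrow>gs. qf n A g)" unfolding Re_sum_list
    by (rule sum_list_nonneg, auto intro: psd_qf[OF pA])
  moreover have "Im (\<Sum>g\<leftarrow>gs. qf n A g) = 0"
  proof -
    have "Im (\<Sum>g\<leftarrow>gs. qf n A g) = (\<Sum>g\<leftarrow>gs. Im (qf n A g))" by (induction gs, auto)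
    also have "\<dots> = 0" using qf_real[OF psd_carrier[OF pA] psd_herm[OF pA]] by (induction gs, auto)
    finally show ?thesis .
  qed
  ultimately show ?thesis using t by simp
qed

definition e00 :: "complex mat" where "e00 = mat 2 2 (\<lambda>(i,j). if i = 0 \<and> j = 0 then 1 else 0)"
definition e11 :: "complex mat" where "e11 = mat 2 2 (\<lambda>(i,j). if i = 1 \<and> j = 1 then 1 else 0)"

lemma density_e00: "density 2 e00"
proof -
  have "psd 2 e00"
  proof (rule qf_psd)
    show "e00 \<in> carrier_mat 2 2" by (simp add: e00_def)
    show "adj e00 = e00" by (rule eq_matI, auto simp: e00_def)
    fix x show "0 \<le> Re (qf 2 e00 x)" by (simp add: qf_def sum2 e00_def cnj_mult_self)
  qed
  moreover have "mtrace e00 = 1" by (simp add: mtrace_def e00_def sum2)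
  ultimately show ?thesis by (simp add: density_def)
qed

lemma density_e11: "density 2 e11"
proof -
  have "psd 2 e11"
  proof (rule qf_psd)
    show "e11 \<in> carrier_mat 2 2" by (simp add: e11_def)
    show "adj e11 = e11" by (rule eq_matI, auto simp: e11_def)
    fix x show "0 \<le> Re (qf 2 e11 x)" by (simp add: qf_def sum2 e11_def cnj_mult_self)
  qed
  moreover have "mtrace e11 = 1" by (simp add: mtrace_def e11_def sum2)
  ultimately show ?thesis by (simp add: density_def)
qed

lemma adj_minus:
  assumes "A \<in> carrier_mat m m" "B \<in> carrier_mat m m"
  shows "adj (A - B) = adj A - adj B"
  by (rule eq_matI, insert assms, auto)

lemma density_carrier: "density n A \<Longrightarrow> A \<in> carrier_mat n n"
  by (simp add: density_def psd_def)

lemma beta_lower: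
  assumes Q: "psd n Q" "psd n (1\<^sub>m n - Q)" "Re (mtrace (\<rho> * Q)) \<ge> 1 - er"
    and ps: "psd n \<sigma>"
  shows "beta n er \<rho> \<sigma> \<le> Re (mtrace (\<sigma> * Q))"
  unfolding beta_def
proof (rule cInf_lower)
  show "Re (mtrace (\<sigma> * Q)) \<in> {Re (mtrace (\<sigma> * Q)) |Q. psd n Q \<and> psd n (1\<^sub>m n - Q) \<and> 1 - er \<le> Re (mtrace (\<rho> * Q))}"
    using Q by blast
  show "bdd_below {Re (mtrace (\<sigma> * Q)) |Q. psd n Q \<and> psd n (1\<^sub>m n - Q) \<and> 1 - er \<le> Re (mtrace (\<rho> * Q))}"
    by (rule bdd_belowI[of _ 0], auto dest: psd_trQ[OF ps])
qed

lemma rev_dir: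
  assumes dr: "density n \<rho>" and ds: "density n \<sigma>"
    and rm: "rel_maj n 2 er es \<rho> \<sigma> e00 e11"
  shows "beta n er \<rho> \<sigma> \<le> es"
proof -
  obtain E where qc: "quantum_channel n 2 E" and T1: "trace_dist (E \<rho>) e00 \<le> er"
    and T2: "trace_dist (E \<sigma>) e11 \<le> es" using rm unfolding rel_maj_def by blast
  obtain Ks where Ks: "\<forall>K\<in>set Ks. K \<in> carrier_mat 2 n"
    and S: "foldr (\<lambda>K acc. adj K * K + acc) Ks (0\<^sub>m n n) = 1\<^sub>m n"
    and EK: "\<forall>A\<in>carrier_mat n n. E A = kraus_apply 2 Ks A"
    using qc unfolding quantum_channel_def by blast
  have r: "\<rho> \<in> carrier_mat n n" and s: "\<sigma> \<in> carrier_mat n n"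
    using dr ds by (auto simp: density_carrier)
  have pr: "psd n \<rho>" and ps: "psd n \<sigma>" and tr: "mtrace \<rho> = 1" and ts: "mtrace \<sigma> = 1"
    using dr ds by (auto simp: density_def)
  define Q where "Q = Rrow 0 Ks n"
  have pQ: "psd n Q" unfolding Q_def by (rule Rrow_psd)
  have pQ': "psd n (1\<^sub>m n - Q)" unfolding Q_def one_minus_Rrow[OF Ks S] by (rule Rrow_psd)
  have est: "cmod (kraus_apply 2 Ks A $$ (0,0) - 1 + c) \<le> trace_dist (kraus_apply 2 Ks A) B"
    if dA: "density n A" and B: "B = mat 2 2 (\<lambda>(i,j). if i = j then (if i = 0 then 1 - c else c) else 0)"
       and c: "c = 0 \<or> c = 1" for A B c
  proof -
    have A: "A \<in> carrier_mat n n" using dA by (simp add: density_carrier)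
    have pA: "psd n A" and tA: "mtrace A = 1" using dA by (auto simp: density_def)
    note E = kraus_props[OF Ks A]
    let ?X = "kraus_apply 2 Ks A"
    have Bc: "B \<in> carrier_mat 2 2" by (simp add: B)
    have hB: "adj B = B" using c by (intro eq_matI, auto simp: B)
    have D: "?X - B \<in> carrier_mat 2 2" using E(1) Bc by (simp add: minus_carrier_mat)
    have hD: "adj (?X - B) = ?X - B"
      by (simp add: adj_minus[OF E(1) Bc] hB kraus_herm[OF Ks A psd_herm[OF pA]])
    have tX: "?X $$ (0,0) + ?X $$ (1,1) = 1"
      using kraus_trace[OF Ks A S] tA by (simp add: sum2 mtrace_sum[OF A])
    have "(\<Sum>j<2. cmod ((?X - B) $$ (j,j))) \<le> trace_norm (?X - B)" by (rule TN_lower[OF D hD])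
    moreover have "(\<Sum>j<2. cmod ((?X - B) $$ (j,j))) = 2 * cmod (?X $$ (0,0) - 1 + c)"
    proof -
      have "(\<Sum>j<2. cmod ((?X - B) $$ (j,j))) = cmod (?X $$ (0,0) - (1 - c)) + cmod (?X $$ (1,1) - c)"
        using E(1) Bc by (simp add: sum2 B)
      also have "?X $$ (1,1) - c = - (?X $$ (0,0) - 1 + c)" using tX by (simp add: algebra_simps)
      also have "cmod (- (?X $$ (0,0) - 1 + c)) = cmod (?X $$ (0,0) - 1 + c)" by (rule norm_minus_cancel)
      also have "?X $$ (0,0) - (1 - c) = ?X $$ (0,0) - 1 + c" by (simp add: algebra_simps)
      finally show ?thesis by simp
    qed
    ultimately show ?thesis unfolding trace_dist_def by simp
  qed
  have B0: "e00 = mat 2 2 (\<lambda>(i,j). if i = j then (if i = 0 then 1 - 0 else 0) else 0)"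
    by (rule eq_matI, auto simp: e00_def)
  have B1: "e11 = mat 2 2 (\<lambda>(i,j). if i = j then (if i = 0 then 1 - 1 else 1) else 0)"
    by (rule eq_matI, auto simp: e11_def)
  have "cmod (kraus_apply 2 Ks \<rho> $$ (0,0) - 1 + 0) \<le> er"
    using est[OF dr B0] T1 EK r by simp
  hence "1 - Re (kraus_apply 2 Ks \<rho> $$ (0,0)) \<le> er"
    by (smt (verit) abs_Re_le_cmod minus_complex.simps(1) one_complex.simps(1) add_0_right)
  moreover have "mtrace (\<rho> * Q) = kraus_apply 2 Ks \<rho> $$ (0,0)" unfolding Q_def by (rule trace_Rrow[OF Ks r], simp)
  ultimately have c1: "1 - er \<le> Re (mtrace (\<rho> * Q))" by simp
  have "cmod (kraus_apply 2 Ks \<sigma> $$ (0,0) - 1 + 1) \<le> es"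
    using est[OF ds B1] T2 EK s by simp
  hence "Re (kraus_apply 2 Ks \<sigma> $$ (0,0)) \<le> es"
    by (smt (verit) abs_Re_le_cmod diff_add_cancel)
  moreover have "mtrace (\<sigma> * Q) = kraus_apply 2 Ks \<sigma> $$ (0,0)" unfolding Q_def by (rule trace_Rrow[OF Ks s], simp)
  ultimately have c2: "Re (mtrace (\<sigma> * Q)) \<le> es" by simp
  have "beta n er \<rho> \<sigma> \<le> Re (mtrace (\<sigma> * Q))" by (rule beta_lower[OF pQ pQ' c1 ps])
  thus ?thesis using c2 by simp
qed

definition rk1 :: "nat \<Rightarrow> nat \<Rightarrow> (nat \<Rightarrow> complex) \<Rightarrow> (nat \<Rightarrow> complex) \<Rightarrow> complex mat" where
  "rk1 m n x y = mat m n (\<lambda>(i,j). x i * cnj (y j))"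

lemma rk1_carrier[simp]: "rk1 m n x y \<in> carrier_mat m n" by (simp add: rk1_def)

lemma rk1_KAK:
  assumes A: "A \<in> carrier_mat n n" and i: "i < m" and j: "j < m"
  shows "(rk1 m n x y * A * adj (rk1 m n x y)) $$ (i,j) = x i * cnj (x j) * qf n A y"
proof -
  have "(rk1 m n x y * A * adj (rk1 m n x y)) $$ (i,j) =
     (\<Sum>k<n. \<Sum>l<n. rk1 m n x y $$ (i,k) * A $$ (k,l) * cnj (rk1 m n x y $$ (j,l)))"
    by (rule KAK_entry[OF rk1_carrier A i j])
  also have "\<dots> = (\<Sum>k<n. \<Sum>l<n. x i * cnj (x j) * (cnj (y k) * A $$ (k,l) * y l))"
    by (intro sum.cong refl, insert i j, simp add: rk1_def mult_ac)
  also have "\<dots> = x i * cnj (x j) * qf n A y"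
    unfolding qf_def by (simp only: sum_distrib_left)
  finally show ?thesis .
qed

lemma rk1_KK:
  assumes k: "k < n" and l: "l < n"
  shows "(adj (rk1 m n x y) * rk1 m n x y) $$ (k,l) = (\<Sum>i<m. cnj (x i) * x i) * (y k * cnj (y l))"
proof -
  have "(adj (rk1 m n x y) * rk1 m n x y) $$ (k,l) = (\<Sum>i<m. cnj (rk1 m n x y $$ (i,k)) * rk1 m n x y $$ (i,l))"
    by (rule KK_entry[OF rk1_carrier k l])
  also have "\<dots> = (\<Sum>i<m. cnj (x i) * x i * (y k * cnj (y l)))"
    by (intro sum.cong refl, insert k l, simp add: rk1_def mult_ac)
  also have "\<dots> = (\<Sum>i<m. cnj (x i) * x i) * (y k * cnj (y l))"
    by (simp only: sum_distrib_right)
  finally show ?thesis .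
qed

lemma sum_list_concat_map:
  "(\<Sum>K\<leftarrow>concat (map (\<lambda>a. map (\<lambda>g. F a g) gs) as). h K) = (\<Sum>a\<leftarrow>as. \<Sum>g\<leftarrow>gs. h (F a g))"
  by (induction as) (simp_all add: o_def)

lemma sum_list_prod: "(\<Sum>a\<leftarrow>as. \<Sum>g\<leftarrow>gs. f a * h g) = (\<Sum>a\<leftarrow>as. f a) * (\<Sum>g\<leftarrow>gs. h g)" for f h :: "_ \<Rightarrow> complex"
proof -
  have "(\<Sum>a\<leftarrow>as. f a) * (\<Sum>g\<leftarrow>gs. h g) = (\<Sum>a\<leftarrow>as. f a * (\<Sum>g\<leftarrow>gs. h g))" by (rule sum_list_mult_right)
  also have "\<dots> = (\<Sum>a\<leftarrow>as. \<Sum>g\<leftarrow>gs. f a * h g)" by (rule sum_list_cong', rule sum_list_mult_left)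
  finally show ?thesis by simp
qed

lemma mtrace_one_minus:
  assumes A: "A \<in> carrier_mat n n" and Q: "Q \<in> carrier_mat n n"
  shows "mtrace (A * (1\<^sub>m n - Q)) = mtrace A - mtrace (A * Q)"
proof -
  have Q': "1\<^sub>m n - Q \<in> carrier_mat n n" using Q by (simp add: minus_carrier_mat)
  have "mtrace (A * (1\<^sub>m n - Q)) = (\<Sum>k<n. \<Sum>l<n. (if l = k then A $$ (k,l) else 0) - A $$ (k,l) * Q $$ (l,k))"
    unfolding mtrace_mult[OF A Q'] using Q by (intro sum.cong refl, auto simp: algebra_simps)
  also have "\<dots> = (\<Sum>k<n. A $$ (k,k)) - mtrace (A * Q)"
    unfolding mtrace_mult[OF A Q] sum_subtractf by simp
  finally show ?thesis using mtrace_sum[OF A] by simp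
qed

lemma fwd_channel:
  assumes pQ: "psd n Q" and pQ': "psd n (1\<^sub>m n - Q)"
    and dr: "density m \<rho>'" and ds: "density m \<sigma>'"
  shows "\<exists>Ks. (\<forall>K\<in>set Ks. K \<in> carrier_mat m n) \<and> foldr (\<lambda>K acc. adj K * K + acc) Ks (0\<^sub>m n n) = 1\<^sub>m n \<and>
     (\<forall>A\<in>carrier_mat n n. kraus_apply m Ks A =
        mat m m (\<lambda>(i,j). mtrace (A * Q) * \<rho>' $$ (i,j) + mtrace (A * (1\<^sub>m n - Q)) * \<sigma>' $$ (i,j)))"
proof -
  have Q: "Q \<in> carrier_mat n n" using pQ by (rule psd_carrier)
  have Q': "1\<^sub>m n - Q \<in> carrier_mat n n" using Q by (simp add: minus_carrier_mat)
  have r: "\<rho>' \<in> carrier_mat m m" and s: "\<sigma>' \<in> carrier_mat m m" using dr ds by (auto simp: density_carrier)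
  obtain gs where gs: "\<forall>j<n. \<forall>k<n. Q $$ (j,k) = (\<Sum>g\<leftarrow>gs. g j * cnj (g k))"
    using psd_decomp[OF pQ] by blast
  obtain ds where dsd: "\<forall>j<n. \<forall>k<n. (1\<^sub>m n - Q) $$ (j,k) = (\<Sum>g\<leftarrow>ds. g j * cnj (g k))"
    using psd_decomp[OF pQ'] by blast
  obtain as where as: "\<forall>j<m. \<forall>k<m. \<rho>' $$ (j,k) = (\<Sum>g\<leftarrow>as. g j * cnj (g k))"
    using psd_decomp[of m \<rho>'] dr by (auto simp: density_def)
  obtain bs where bs: "\<forall>j<m. \<forall>k<m. \<sigma>' $$ (j,k) = (\<Sum>g\<leftarrow>bs. g j * cnj (g k))"
    using psd_decomp[of m \<sigma>'] ds by (auto simp: density_def)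
  have tr1: "(\<Sum>a\<leftarrow>as. \<Sum>i<m. cnj (a i) * a i) = 1"
  proof -
    have "(\<Sum>a\<leftarrow>as. \<Sum>i<m. cnj (a i) * a i) = (\<Sum>i<m. \<Sum>a\<leftarrow>as. a i * cnj (a i))"
      by (simp only: sum_list_sum_swap mult.commute)
    also have "\<dots> = mtrace \<rho>'" unfolding mtrace_sum[OF r] using as by simp
    finally show ?thesis using dr by (simp add: density_def)
  qed
  have tr2: "(\<Sum>a\<leftarrow>bs. \<Sum>i<m. cnj (a i) * a i) = 1"
  proof -
    have "(\<Sum>a\<leftarrow>bs. \<Sum>i<m. cnj (a i) * a i) = (\<Sum>i<m. \<Sum>a\<leftarrow>bs. a i * cnj (a i))"
      by (simp only: sum_list_sum_swap mult.commute)
    also have "\<dots> = mtrace \<sigma>'" unfolding mtrace_sum[OF s] using bs by simp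
    finally show ?thesis using ds by (simp add: density_def)
  qed
  define K1 where "K1 = concat (map (\<lambda>a. map (\<lambda>g. rk1 m n a g) gs) as)"
  define K2 where "K2 = concat (map (\<lambda>a. map (\<lambda>g. rk1 m n a g) ds) bs)"
  define Ks where "Ks = K1 @ K2"
  have Ks: "\<forall>K\<in>set Ks. K \<in> carrier_mat m n" by (auto simp: Ks_def K1_def K2_def)
  have S: "foldr (\<lambda>K acc. adj K * K + acc) Ks (0\<^sub>m n n) = 1\<^sub>m n"
  proof -
    note fe = foldr_entry[OF KK_carrier[OF Ks]]
    show ?thesis
    proof (rule eq_matI)
      fix k l assume "k < dim_row (1\<^sub>m n)" "l < dim_col (1\<^sub>m n)"
      hence k: "k < n" and l: "l < n" by auto
      have "foldr (\<lambda>K acc. adj K * K + acc) Ks (0\<^sub>m n n) $$ (k,l) = (\<Sum>K\<leftarrow>Ks. (adj K * K) $$ (k,l))"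
        using fe k l by blast
      also have "\<dots> = (\<Sum>a\<leftarrow>as. \<Sum>g\<leftarrow>gs. (\<Sum>i<m. cnj (a i) * a i) * (g k * cnj (g l)))
                    + (\<Sum>a\<leftarrow>bs. \<Sum>g\<leftarrow>ds. (\<Sum>i<m. cnj (a i) * a i) * (g k * cnj (g l)))"
        by (simp only: Ks_def K1_def K2_def map_append sum_list_append sum_list_concat_map rk1_KK[OF k l])
      also have "\<dots> = Q $$ (k,l) + (1\<^sub>m n - Q) $$ (k,l)"
        unfolding sum_list_prod tr1 tr2 using gs dsd k l by simp
      also have "\<dots> = 1\<^sub>m n $$ (k,l)" using Q k l by simp
      finally show "foldr (\<lambda>K acc. adj K * K + acc) Ks (0\<^sub>m n n) $$ (k,l) = 1\<^sub>m n $$ (k,l)" .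
    qed (insert fe, auto)
  qed
  have E: "kraus_apply m Ks A =
        mat m m (\<lambda>(i,j). mtrace (A * Q) * \<rho>' $$ (i,j) + mtrace (A * (1\<^sub>m n - Q)) * \<sigma>' $$ (i,j))"
    if A: "A \<in> carrier_mat n n" for A
  proof -
    note fe = foldr_entry[OF KAK_carrier[OF Ks A]]
    show ?thesis
    proof (rule eq_matI)
      fix i j assume "i < dim_row (mat m m (\<lambda>(i,j). mtrace (A * Q) * \<rho>' $$ (i,j) + mtrace (A * (1\<^sub>m n - Q)) * \<sigma>' $$ (i,j)))"
        "j < dim_col (mat m m (\<lambda>(i,j). mtrace (A * Q) * \<rho>' $$ (i,j) + mtrace (A * (1\<^sub>m n - Q)) * \<sigma>' $$ (i,j)))"
      hence i: "i < m" and j: "j < m" by auto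
      have "kraus_apply m Ks A $$ (i,j) = (\<Sum>K\<leftarrow>Ks. (K * A * adj K) $$ (i,j))"
        using fe i j unfolding kraus_apply_def by blast
      also have "\<dots> = (\<Sum>a\<leftarrow>as. \<Sum>g\<leftarrow>gs. a i * cnj (a j) * qf n A g)
                    + (\<Sum>a\<leftarrow>bs. \<Sum>g\<leftarrow>ds. a i * cnj (a j) * qf n A g)"
        by (simp only: Ks_def K1_def K2_def map_append sum_list_append sum_list_concat_map rk1_KAK[OF A i j])
      also have "\<dots> = \<rho>' $$ (i,j) * mtrace (A * Q) + \<sigma>' $$ (i,j) * mtrace (A * (1\<^sub>m n - Q))"
        unfolding sum_list_prod trQ[OF A Q gs] trQ[OF A Q' dsd] using as bs i j by simp
      finally show "kraus_apply m Ks A $$ (i,j) = mat m m (\<lambda>(i,j). mtrace (A * Q) * \<rho>' $$ (i,j) + mtrace (A * (1\<^sub>m n - Q)) * \<sigma>' $$ (i,j)) $$ (i,j)"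
        using i j by (simp add: mult.commute)
    qed (insert fe, auto simp: kraus_apply_def)
  qed
  show ?thesis using Ks S E by blast
qed

lemma fwd_dir:
  assumes pQ: "psd n Q" and pQ': "psd n (1\<^sub>m n - Q)"
    and dr: "density n \<rho>" and ds: "density n \<sigma>"
    and c1: "1 - er \<le> Re (mtrace (\<rho> * Q))" and c2: "Re (mtrace (\<sigma> * Q)) \<le> es"
    and dr': "density m \<rho>'" and ds': "density m \<sigma>'"
  shows "rel_maj n m er es \<rho> \<sigma> \<rho>' \<sigma>'"
proof -
  obtain Ks where Ks: "\<forall>K\<in>set Ks. K \<in> carrier_mat m n"
    and S: "foldr (\<lambda>K acc. adj K * K + acc) Ks (0\<^sub>m n n) = 1\<^sub>m n"
    and E: "\<forall>A\<in>carrier_mat n n. kraus_apply m Ks A =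
        mat m m (\<lambda>(i,j). mtrace (A * Q) * \<rho>' $$ (i,j) + mtrace (A * (1\<^sub>m n - Q)) * \<sigma>' $$ (i,j))"
    using fwd_channel[OF pQ pQ' dr' ds'] by blast
  have Q: "Q \<in> carrier_mat n n" using pQ by (rule psd_carrier)
  have r': "\<rho>' \<in> carrier_mat m m" and s': "\<sigma>' \<in> carrier_mat m m" using dr' ds' by (auto simp: density_carrier)
  have pr': "psd m \<rho>'" "mtrace \<rho>' = 1" and ps': "psd m \<sigma>'" "mtrace \<sigma>' = 1" using dr' ds' by (auto simp: density_def)
  have qc: "quantum_channel n m (kraus_apply m Ks)"
    unfolding quantum_channel_def using Ks S by blast
  have gen: "trace_dist (kraus_apply m Ks A) \<rho>' \<le> 1 - Re (mtrace (A * Q)) \<and>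
             trace_dist (kraus_apply m Ks A) \<sigma>' \<le> Re (mtrace (A * Q))"
    if dA: "density n A" for A
  proof -
    have A: "A \<in> carrier_mat n n" using dA by (rule density_carrier)
    have pA: "psd n A" and tA: "mtrace A = 1" using dA by (auto simp: density_def)
    define P where "P = Re (mtrace (A * Q))"
    have t1: "mtrace (A * Q) = complex_of_real P" using psd_trQ[OF pA pQ] unfolding P_def
      by (simp add: complex_eq_iff)
    have t2: "mtrace (A * (1\<^sub>m n - Q)) = complex_of_real (1 - P)"
      unfolding mtrace_one_minus[OF A Q] tA t1 by simp
    have P0: "0 \<le> P" using psd_trQ[OF pA pQ] unfolding P_def by simp
    have P1: "P \<le> 1" using psd_trQ[OF pA pQ'] unfolding t2 by simp
    have EA: "kraus_apply m Ks A = mat m m (\<lambda>(i,j). complex_of_real P * \<rho>' $$ (i,j) + complex_of_real (1 - P) * \<sigma>' $$ (i,j))"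
      using E A t1 t2 by simp
    have D1: "kraus_apply m Ks A - \<rho>' = complex_of_real (1 - P) \<cdot>\<^sub>m (\<sigma>' - \<rho>')"
      unfolding EA by (rule eq_matI, insert r' s', auto simp: algebra_simps)
    have D2: "kraus_apply m Ks A - \<sigma>' = complex_of_real P \<cdot>\<^sub>m (\<rho>' - \<sigma>')"
      unfolding EA by (rule eq_matI, insert r' s', auto simp: algebra_simps)
    have "trace_dist (kraus_apply m Ks A) \<rho>' \<le> 1 - P"
      unfolding trace_dist_def D1 using TN_upper[OF ps'(1) pr'(1) ps'(2) pr'(2), of "1 - P"] P1 by simp
    moreover have "trace_dist (kraus_apply m Ks A) \<sigma>' \<le> P"
      unfolding trace_dist_def D2 using TN_upper[OF pr'(1) ps'(1) pr'(2) ps'(2), of P] P0 by simp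
    ultimately show ?thesis unfolding P_def by simp
  qed
  show ?thesis unfolding rel_maj_def
    using qc gen[OF dr] gen[OF ds] c1 c2 by force
qed

lemma real_subseq:
  fixes s :: "nat \<Rightarrow> real"
  assumes "\<And>k. \<bar>s k\<bar> \<le> B"
  shows "\<exists>r l. strict_mono r \<and> (\<lambda>k. s (r k)) \<longlonglongrightarrow> l"
proof -
  obtain f where f: "strict_mono f" and m: "monoseq (\<lambda>n. s (f n))" using seq_monosub by blast
  have "Bseq (\<lambda>n. s (f n))" by (rule BseqI'[of _ B], simp add: assms)
  hence "convergent (\<lambda>n. s (f n))" using m by (rule Bseq_monoseq_convergent)
  thus ?thesis using f unfolding convergent_def by blast
qed

lemma fam_subseq:
  fixes f :: "nat \<Rightarrow> 'i \<Rightarrow> real"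
  assumes "finite I" and "\<And>i k. i \<in> I \<Longrightarrow> \<bar>f k i\<bar> \<le> B"
  shows "\<exists>r L. strict_mono r \<and> (\<forall>i\<in>I. (\<lambda>k. f (r k) i) \<longlonglongrightarrow> L i)"
  using assms
proof (induction I rule: finite_induct)
  case empty
  show ?case by (rule exI[of _ id], auto simp: strict_mono_def)
next
  case (insert x I)
  obtain r L where r: "strict_mono r" and L: "\<forall>i\<in>I. (\<lambda>k. f (r k) i) \<longlonglongrightarrow> L i"
    using insert.IH insert.prems by auto
  obtain s l where s: "strict_mono s" and l: "(\<lambda>k. f (r (s k)) x) \<longlonglongrightarrow> l"
    using real_subseq[of "\<lambda>k. f (r k) x" B] insert.prems by auto
  have "\<forall>i\<in>insert x I. (\<lambda>k. f ((r \<circ> s) k) i) \<longlonglongrightarrow> (L(x := l)) i"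
  proof
    fix i assume "i \<in> insert x I"
    show "(\<lambda>k. f ((r \<circ> s) k) i) \<longlonglongrightarrow> (L(x := l)) i"
    proof (cases "i = x")
      case True thus ?thesis using l by simp
    next
      case False
      hence i: "i \<in> I" using \<open>i \<in> insert x I\<close> by simp
      have "((\<lambda>k. f (r k) i) \<circ> s) \<longlonglongrightarrow> L i" by (rule LIMSEQ_subseq_LIMSEQ[OF bspec[OF L i] s])
      thus ?thesis using False by (simp add: o_def)
    qed
  qed
  thus ?case using strict_mono_o[OF r s] by blast
qed

lemma cfam_subseq:
  fixes F :: "nat \<Rightarrow> 'i \<Rightarrow> complex"
  assumes "finite I" and "\<And>i k. i \<in> I \<Longrightarrow> cmod (F k i) \<le> B"
  shows "\<exists>r L. strict_mono r \<and> (\<forall>i\<in>I. (\<lambda>k. F (r k) i) \<longlonglongrightarrow> L i)"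
proof -
  define f where "f = (\<lambda>k (i, b). if b then Im (F k i) else Re (F k i))"
  have "finite (I \<times> (UNIV :: bool set))" using assms(1) by simp
  moreover have "\<bar>f k p\<bar> \<le> B" if "p \<in> I \<times> (UNIV :: bool set)" for k p
  proof -
    obtain i b where pe: "p = (i,b)" by (cases p)
    hence i: "i \<in> I" using that by auto
    have B: "cmod (F k i) \<le> B" using assms(2)[OF i] .
    have "\<bar>Re (F k i)\<bar> \<le> B" using abs_Re_le_cmod[of "F k i"] B by linarith
    moreover have "\<bar>Im (F k i)\<bar> \<le> B" using abs_Im_le_cmod[of "F k i"] B by linarith
    ultimately show ?thesis unfolding f_def pe by simp
  qed
  ultimately obtain r L where r: "strict_mono r" and L: "\<forall>p\<in>I \<times> (UNIV :: bool set). (\<lambda>k. f (r k) p) \<longlonglongrightarrow> L p"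
    using fam_subseq by blast
  have "\<forall>i\<in>I. (\<lambda>k. F (r k) i) \<longlonglongrightarrow> Complex (L (i, False)) (L (i, True))"
  proof
    fix i assume i: "i \<in> I"
    have a: "(\<lambda>k. Re (F (r k) i)) \<longlonglongrightarrow> L (i, False)" using bspec[OF L, of "(i,False)"] i by (simp add: f_def)
    have b: "(\<lambda>k. Im (F (r k) i)) \<longlonglongrightarrow> L (i, True)" using bspec[OF L, of "(i,True)"] i by (simp add: f_def)
    have "(\<lambda>k. Complex (Re (F (r k) i)) (Im (F (r k) i))) \<longlonglongrightarrow> Complex (L (i, False)) (L (i, True))"
      by (rule tendsto_Complex[OF a b])
    thus "(\<lambda>k. F (r k) i) \<longlonglongrightarrow> Complex (L (i, False)) (L (i, True))" by simp
  qed
  thus ?thesis using r by (intro exI[of _ r] exI[of _ "\<lambda>i. Complex (L (i, False)) (L (i, True))"] conjI)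
qed

lemma qf_tendsto:
  assumes "\<forall>j<n. \<forall>l<n. (\<lambda>k. M k $$ (j,l)) \<longlonglongrightarrow> M0 $$ (j,l)"
  shows "(\<lambda>k. qf n (M k) x) \<longlonglongrightarrow> qf n M0 x"
  unfolding qf_def using assms by (auto intro!: tendsto_intros)

lemma mtrace_tendsto:
  assumes A: "A \<in> carrier_mat n n" and M: "\<forall>k. M k \<in> carrier_mat n n" and M0: "M0 \<in> carrier_mat n n"
    and c: "\<forall>j<n. \<forall>l<n. (\<lambda>k. M k $$ (j,l)) \<longlonglongrightarrow> M0 $$ (j,l)"
  shows "(\<lambda>k. mtrace (A * M k)) \<longlonglongrightarrow> mtrace (A * M0)"
  unfolding mtrace_mult[OF A M0] using c by (subst mtrace_mult[OF A spec[OF M]], auto intro!: tendsto_intros)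

lemma psd_limit:
  assumes p: "\<forall>k. psd n (M k)" and M0: "M0 \<in> carrier_mat n n"
    and c: "\<forall>j<n. \<forall>l<n. (\<lambda>k. M k $$ (j,l)) \<longlonglongrightarrow> M0 $$ (j,l)"
  shows "psd n M0"
proof (rule qf_psd[OF M0])
  show "adj M0 = M0"
  proof (rule eq_matI)
    fix j l assume "j < dim_row M0" "l < dim_col M0"
    hence j: "j < n" and l: "l < n" using M0 by auto
    have "(\<lambda>k. M k $$ (j,l)) = (\<lambda>k. cnj (M k $$ (l,j)))"
    proof
      fix k
      have Mk: "M k \<in> carrier_mat n n" using p psd_carrier by blast
      show "M k $$ (j,l) = cnj (M k $$ (l,j))"
        using arg_cong[OF psd_herm[OF spec[OF p, of k]], of "\<lambda>X. X $$ (j,l)"] Mk j l by simp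
    qed
    moreover have "(\<lambda>k. cnj (M k $$ (l,j))) \<longlonglongrightarrow> cnj (M0 $$ (l,j))" using c j l by (auto intro: tendsto_cnj)
    ultimately have "M0 $$ (j,l) = cnj (M0 $$ (l,j))" using c j l LIMSEQ_unique by metis
    thus "adj M0 $$ (j,l) = M0 $$ (j,l)" using M0 j l by simp
  qed (insert M0, auto)
  fix x
  have "(\<lambda>k. Re (qf n (M k) x)) \<longlonglongrightarrow> Re (qf n M0 x)" by (rule tendsto_Re[OF qf_tendsto[OF c]])
  moreover have "\<forall>k. 0 \<le> Re (qf n (M k) x)" using p psd_qf by blast
  ultimately show "0 \<le> Re (qf n M0 x)" by (intro LIMSEQ_le_const) auto
qed

lemma qf_unit: "i < n \<Longrightarrow> qf n M (\<lambda>k. if k = i then 1 else 0) = M $$ (i,i)"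
proof -
  assume i: "i < n"
  have "qf n M (\<lambda>k. if k = i then 1 else 0) = (\<Sum>j<n. if j = i then M $$ (i,i) else 0)"
    unfolding qf_def
  proof (rule sum.cong[OF refl])
    fix j assume "j \<in> {..<n}"
    show "(\<Sum>k<n. cnj (if j = i then 1 else 0) * M $$ (j, k) * (if k = i then 1 else 0)) = (if j = i then M $$ (i,i) else 0)"
      using i by (cases "j = i", auto simp: if_distrib[of "\<lambda>x. _ * x"] cong: if_cong)
  qed
  also have "\<dots> = M $$ (i,i)" using i by simp
  finally show ?thesis .
qed
lemma entry_bound:
  assumes pQ: "psd n Q" and pQ': "psd n (1\<^sub>m n - Q)" and j: "j < n" and l: "l < n"
  shows "cmod (Q $$ (j,l)) \<le> 1"
proof -
  have Q: "Q \<in> carrier_mat n n" using pQ by (rule psd_carrier)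
  obtain gs where gs: "\<forall>j<n. \<forall>k<n. Q $$ (j,k) = (\<Sum>g\<leftarrow>gs. g j * cnj (g k))"
    using psd_decomp[OF pQ] by blast
  have diag: "Re (Q $$ (i,i)) = (\<Sum>g\<leftarrow>gs. (cmod (g i))\<^sup>2)" if i: "i < n" for i
  proof -
    have "Q $$ (i,i) = (\<Sum>g\<leftarrow>gs. g i * cnj (g i))" using gs i by simp
    also have "\<dots> = (\<Sum>g\<leftarrow>gs. complex_of_real ((cmod (g i))\<^sup>2))" by (simp only: complex_norm_square)
    also have "\<dots> = complex_of_real (\<Sum>g\<leftarrow>gs. (cmod (g i))\<^sup>2)" by (induction gs, auto)
    finally show ?thesis by simp
  qed
  have le1: "Re (Q $$ (i,i)) \<le> 1" if i: "i < n" for i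
  proof -
    have "0 \<le> Re (qf n (1\<^sub>m n - Q) (\<lambda>k. if k = i then 1 else 0))" by (rule psd_qf[OF pQ'])
    also have "qf n (1\<^sub>m n - Q) (\<lambda>k. if k = i then 1 else 0) = (1\<^sub>m n - Q) $$ (i,i)"
      by (rule qf_unit[OF i])
    finally show ?thesis using i Q by simp
  qed
  have "cmod (Q $$ (j,l)) = cmod (\<Sum>g\<leftarrow>gs. g j * cnj (g l))" using gs j l by simp
  also have "\<dots> \<le> (\<Sum>g\<leftarrow>gs. ((cmod (g j))\<^sup>2 + (cmod (g l))\<^sup>2) / 2)"
  proof (induction gs)
    case (Cons g gs)
    have "cmod (g j * cnj (g l)) \<le> ((cmod (g j))\<^sup>2 + (cmod (g l))\<^sup>2) / 2"
    proof -
      have "0 \<le> (cmod (g j) - cmod (g l))\<^sup>2" by simp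
      thus ?thesis by (simp add: norm_mult power2_eq_square algebra_simps)
    qed
    thus ?case using Cons norm_triangle_ineq[of "g j * cnj (g l)" "\<Sum>g\<leftarrow>gs. g j * cnj (g l)"]
      by (simp only: list.map sum_list.Cons)
  qed simp
  also have "\<dots> = ((\<Sum>g\<leftarrow>gs. (cmod (g j))\<^sup>2) + (\<Sum>g\<leftarrow>gs. (cmod (g l))\<^sup>2)) / 2"
    by (induction gs, auto simp: field_simps)
  also have "\<dots> \<le> 1" using le1[OF j] le1[OF l] diag[OF j] diag[OF l] by simp
  finally show ?thesis .
qed

lemma psd_one: "psd n (1\<^sub>m n)"
  by (rule qf_psd, auto simp: qf_def if_distrib[of "\<lambda>x. x * _"] cnj_mult_self cong: if_cong intro!: sum_nonneg)

lemma psd_zero: "psd n (0\<^sub>m n n)"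
  by (rule qf_psd, auto simp: qf_def)

lemma attain:
  assumes dr: "density n \<rho>" and ds: "density n \<sigma>" and er: "0 \<le> er" and b: "beta n er \<rho> \<sigma> \<le> es"
  shows "\<exists>Q. psd n Q \<and> psd n (1\<^sub>m n - Q) \<and> 1 - er \<le> Re (mtrace (\<rho> * Q)) \<and> Re (mtrace (\<sigma> * Q)) \<le> es"
proof -
  have r: "\<rho> \<in> carrier_mat n n" and s: "\<sigma> \<in> carrier_mat n n" using dr ds by (auto simp: density_carrier)
  have ps: "psd n \<sigma>" and tr: "mtrace \<rho> = 1" using dr ds by (auto simp: density_def)
  define Sset where "Sset = {Re (mtrace (\<sigma> * Q)) | Q. psd n Q \<and> psd n (1\<^sub>m n - Q) \<and> 1 - er \<le> Re (mtrace (\<rho> * Q))}"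
  have bdef: "beta n er \<rho> \<sigma> = Inf Sset" unfolding beta_def Sset_def ..
  have z: "1\<^sub>m n - 1\<^sub>m n = (0\<^sub>m n n :: complex mat)" by (rule eq_matI) auto
  have r1: "\<rho> * 1\<^sub>m n = \<rho>" using r by simp
  have "Re (mtrace (\<sigma> * 1\<^sub>m n)) \<in> Sset"
    unfolding Sset_def
  proof (intro CollectI exI conjI)
    show "psd n (1\<^sub>m n)" by (rule psd_one)
    show "psd n (1\<^sub>m n - 1\<^sub>m n)" unfolding z by (rule psd_zero)
    show "1 - er \<le> Re (mtrace (\<rho> * 1\<^sub>m n))" unfolding r1 tr using er by simp
  qed simp
  hence ne: "Sset \<noteq> {}" by blast
  have "\<forall>k. \<exists>Q. psd n Q \<and> psd n (1\<^sub>m n - Q) \<and> 1 - er \<le> Re (mtrace (\<rho> * Q)) \<and>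
      Re (mtrace (\<sigma> * Q)) < beta n er \<rho> \<sigma> + inverse (real (Suc k))"
  proof
    fix k
    have "Inf Sset < beta n er \<rho> \<sigma> + inverse (real (Suc k))" unfolding bdef by simp
    from cInf_lessD[OF ne this] show "\<exists>Q. psd n Q \<and> psd n (1\<^sub>m n - Q) \<and> 1 - er \<le> Re (mtrace (\<rho> * Q)) \<and>
      Re (mtrace (\<sigma> * Q)) < beta n er \<rho> \<sigma> + inverse (real (Suc k))" unfolding Sset_def by blast
  qed
  then obtain Qs where Qs: "\<And>k. psd n (Qs k)" "\<And>k. psd n (1\<^sub>m n - Qs k)" "\<And>k. 1 - er \<le> Re (mtrace (\<rho> * Qs k))"
    "\<And>k. Re (mtrace (\<sigma> * Qs k)) < beta n er \<rho> \<sigma> + inverse (real (Suc k))"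
    by metis
  have "\<exists>r L. strict_mono r \<and> (\<forall>p\<in>{..<n} \<times> {..<n}. (\<lambda>k. Qs (r k) $$ p) \<longlonglongrightarrow> L p)"
    by (rule cfam_subseq[where B = 1], simp, auto intro: entry_bound[OF Qs(1) Qs(2)])
  then obtain r L where r: "strict_mono r" and L: "\<forall>p\<in>{..<n} \<times> {..<n}. (\<lambda>k. Qs (r k) $$ p) \<longlonglongrightarrow> L p"
    by blast
  define Q0 where "Q0 = mat n n L"
  have Q0: "Q0 \<in> carrier_mat n n" by (simp add: Q0_def)
  have c: "\<forall>j<n. \<forall>l<n. (\<lambda>k. Qs (r k) $$ (j,l)) \<longlonglongrightarrow> Q0 $$ (j,l)"
    using L by (auto simp: Q0_def)
  have Mc: "\<forall>k. Qs (r k) \<in> carrier_mat n n" using Qs(1) psd_carrier by blast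
  have pQ0: "psd n Q0" by (rule psd_limit[OF _ Q0 c], simp add: Qs)
  have c': "\<forall>j<n. \<forall>l<n. (\<lambda>k. (1\<^sub>m n - Qs (r k)) $$ (j,l)) \<longlonglongrightarrow> (1\<^sub>m n - Q0) $$ (j,l)"
  proof (intro allI impI)
    fix j l assume j: "j < n" and l: "l < n"
    have eq: "(\<lambda>k. (1\<^sub>m n - Qs (r k)) $$ (j,l)) = (\<lambda>k. (if j = l then 1 else 0) - Qs (r k) $$ (j,l))"
    proof
      fix k show "(1\<^sub>m n - Qs (r k)) $$ (j,l) = (if j = l then 1 else 0) - Qs (r k) $$ (j,l)"
      proof -
        have "dim_row (Qs (r k)) = n" "dim_col (Qs (r k)) = n" using Mc by auto
        thus ?thesis using j l by simp
      qed
    qed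
    have "(1\<^sub>m n - Q0) $$ (j,l) = (if j = l then 1 else 0) - Q0 $$ (j,l)" using Q0 j l by simp
    show "(\<lambda>k. (1\<^sub>m n - Qs (r k)) $$ (j,l)) \<longlonglongrightarrow> (1\<^sub>m n - Q0) $$ (j,l)"
      unfolding eq \<open>(1\<^sub>m n - Q0) $$ (j,l) = (if j = l then 1 else 0) - Q0 $$ (j,l)\<close>
      by (rule tendsto_diff[OF tendsto_const], insert c j l, auto)
  qed
  have pQ0': "psd n (1\<^sub>m n - Q0)"
    by (rule psd_limit[OF _ _ c'], simp add: Qs, simp add: Q0 minus_carrier_mat)
  have t1: "(\<lambda>k. Re (mtrace (\<rho> * Qs (r k)))) \<longlonglongrightarrow> Re (mtrace (\<rho> * Q0))"
    by (rule tendsto_Re[OF mtrace_tendsto[OF density_carrier[OF dr] Mc Q0 c]])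
  have c1: "1 - er \<le> Re (mtrace (\<rho> * Q0))" by (rule LIMSEQ_le_const[OF t1], auto intro: Qs(3))
  have t2: "(\<lambda>k. Re (mtrace (\<sigma> * Qs (r k)))) \<longlonglongrightarrow> Re (mtrace (\<sigma> * Q0))"
    by (rule tendsto_Re[OF mtrace_tendsto[OF density_carrier[OF ds] Mc Q0 c]])
  have t3: "(\<lambda>k. beta n er \<rho> \<sigma> + inverse (real (Suc k))) \<longlonglongrightarrow> beta n er \<rho> \<sigma> + 0"
    by (rule tendsto_add[OF tendsto_const LIMSEQ_inverse_real_of_nat])
  have le: "Re (mtrace (\<sigma> * Qs (r k))) \<le> beta n er \<rho> \<sigma> + inverse (real (Suc k))" for k
  proof -
    have "k \<le> r k" using seq_suble[OF r] .
    hence "inverse (real (Suc (r k))) \<le> inverse (real (Suc k))" by (simp add: le_imp_inverse_le)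
    thus ?thesis using Qs(4)[of "r k"] by linarith
  qed
  have "Re (mtrace (\<sigma> * Q0)) \<le> beta n er \<rho> \<sigma> + 0" by (rule LIMSEQ_le[OF t2 t3], rule exI[of _ 0], intro allI impI, rule le)
  hence c2: "Re (mtrace (\<sigma> * Q0)) \<le> es" using b by simp
  show ?thesis using pQ0 pQ0' c1 c2 by blast
qed

theorem lemma13:
  fixes n :: nat and \<rho> \<sigma> :: "complex mat" and er es :: real
  assumes "density n \<rho>" and "density n \<sigma>" and "0 \<le> er" and "0 \<le> es"
  shows "beta n er \<rho> \<sigma> \<le> es \<longleftrightarrow>
    (\<forall>m \<rho>' \<sigma>'. density m \<rho>' \<and> density m \<sigma>' \<longrightarrow> rel_maj n m er es \<rho> \<sigma> \<rho>' \<sigma>')"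
proof
  assume b: "beta n er \<rho> \<sigma> \<le> es"
  obtain Q where Q: "psd n Q" "psd n (1\<^sub>m n - Q)" "1 - er \<le> Re (mtrace (\<rho> * Q))" "Re (mtrace (\<sigma> * Q)) \<le> es"
    using attain[OF assms(1,2,3) b] by blast
  show "\<forall>m \<rho>' \<sigma>'. density m \<rho>' \<and> density m \<sigma>' \<longrightarrow> rel_maj n m er es \<rho> \<sigma> \<rho>' \<sigma>'"
    using fwd_dir[OF Q(1,2) assms(1,2) Q(3,4)] by blast
next
  assume "\<forall>m \<rho>' \<sigma>'. density m \<rho>' \<and> density m \<sigma>' \<longrightarrow> rel_maj n m er es \<rho> \<sigma> \<rho>' \<sigma>'"
  hence "rel_maj n 2 er es \<rho> \<sigma> e00 e11" using density_e00 density_e11 by blast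
  thus "beta n er \<rho> \<sigma> \<le> es" by (rule rev_dir[OF assms(1,2)])
qed

end
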